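(* Fix $f=\{f_n\}_{n=0}^N$, $q=\{q_n\}_{n=1}^N$, a self-adjoint boundary condition $\mathbf A$, an index $1\le i\le N$, and positive numbers $w_m^{(0)}$ for $m\neq i$. Let $k$ be the number of eigenvalues of the problem $((f,q,w),\mathbf A)$ (which does not depend on $w\in(0,\infty)^N$), and let $0\le j\le k-1$. For $w_i>0$ let $\lambda_j(w_i)$ denote the $j$-th eigenvalue of the problem with weight $w=(w_1^{(0)},\dots,w_{i-1}^{(0)},w_i,w_{i+1}^{(0)},\dots,w_N^{(0)})$. If $\lambda_j(w_i^{(0)})=0$ for some $w_i^{(0)}>0$, then $\lambda_j(w_i)=0$ for all $w_i>w_i^{(0)}$.
   Context: Let $N\ge2$ be an integer. For real sequences $f=\{f_n\}_{n=0}^N$ with $f_n\neq0$, $q=\{q_n\}_{n=1}^N$, and $w=\{w_n\}_{n=1}^N$ with $w_n>0$, consider $-\nabla(f_n\Delta y_n)+q_ny_n=\lambda w_ny_n$, $1\le n\le N$, for $y=\{y_n\}_{n=0}^{N+1}$, $\Delta y_n=y_{n+1}-y_n$, $\nabla y_n=y_n-y_{n-1}$, with a boundary condition $A(y_0,f_0\Delta y_0)^T+B(y_N,f_N\Delta y_N)^T=0$, $A,B$ complex $2\times2$, $\mathrm{rank}(A,B)=2$, self-adjoint meaning $AJA^*=BJB^*$ with $J=\begin{pmatrix}0&1\\-1&0\end{pmatrix}$. Eigenvalues ($\lambda$ with a nontrivial solution) are real; multiplicity = dimension of solution space; counted with multiplicity they are ordered $\lambda_0\le\lambda_1\le\cdots\le\lambda_{k-1}$.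 *)

theory Defs
  imports "HOL-Analysis.Analysis" "HOL-Library.Multiset" "HOL-Library.Function_Algebras"
begin

text \<open>Discrete Sturm-Liouville problem
  -nabla(f_n Delta y_n) + q_n y_n = lambda w_n y_n, 1 <= n <= N,
  with boundary condition A (y_0, f_0 Delta y_0)^T + B (y_N, f_N Delta y_N)^T = 0.
  Sequences are functions on nat; y is indexed by 0..N+1 and is taken to vanish beyond N+1.\<close>

definition fwd_diff :: "(nat \<Rightarrow> complex) \<Rightarrow> nat \<Rightarrow> complex" where
  "fwd_diff y n = y (Suc n) - y n"

definition Jmat :: "complex^2^2" where
  "Jmat = vector [vector [0, 1], vector [-1, 0]]"

definition cadj :: "complex^2^2 \<Rightarrow> complex^2^2" where
  "cadj A = (\<chi> i j. cnj (A $ j $ i))"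

definition rank_AB_2 :: "complex^2^2 \<Rightarrow> complex^2^2 \<Rightarrow> bool" where
  "rank_AB_2 A B \<longleftrightarrow> (\<forall>c::complex^2. c v* A = 0 \<and> c v* B = 0 \<longrightarrow> c = 0)"

definition self_adjoint_bc :: "complex^2^2 \<Rightarrow> complex^2^2 \<Rightarrow> bool" where
  "self_adjoint_bc A B \<longleftrightarrow> A ** Jmat ** cadj A = B ** Jmat ** cadj B"

definition sl_solutions ::
  "nat \<Rightarrow> (nat \<Rightarrow> real) \<Rightarrow> (nat \<Rightarrow> real) \<Rightarrow> (nat \<Rightarrow> real) \<Rightarrow>
   complex^2^2 \<Rightarrow> complex^2^2 \<Rightarrow> complex \<Rightarrow> (nat \<Rightarrow> complex) set" where
  "sl_solutions N f q w A B lam =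
     {y. (\<forall>n>N+1. y n = 0) \<and>
         (\<forall>n\<in>{1..N}.
            - (of_real (f n) * fwd_diff y n - of_real (f (n-1)) * fwd_diff y (n-1))
            + of_real (q n) * y n = lam * of_real (w n) * y n) \<and>
         A *v vector [y 0, of_real (f 0) * fwd_diff y 0]
         + B *v vector [y N, of_real (f N) * fwd_diff y N] = 0}"

definition is_eigenvalue ::
  "nat \<Rightarrow> (nat \<Rightarrow> real) \<Rightarrow> (nat \<Rightarrow> real) \<Rightarrow> (nat \<Rightarrow> real) \<Rightarrow>
   complex^2^2 \<Rightarrow> complex^2^2 \<Rightarrow> complex \<Rightarrow> bool" where
  "is_eigenvalue N f q w A B lam \<longleftrightarrow> (\<exists>y\<in>sl_solutions N f q w A B lam. y \<noteq> (\<lambda>_. 0))"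

definition eig_mult ::
  "nat \<Rightarrow> (nat \<Rightarrow> real) \<Rightarrow> (nat \<Rightarrow> real) \<Rightarrow> (nat \<Rightarrow> real) \<Rightarrow>
   complex^2^2 \<Rightarrow> complex^2^2 \<Rightarrow> complex \<Rightarrow> nat" where
  "eig_mult N f q w A B lam =
     vector_space.dim (\<lambda>(c::complex) (y::nat \<Rightarrow> complex). (\<lambda>n. c * y n))
       (sl_solutions N f q w A B lam)"

definition eig_list ::
  "nat \<Rightarrow> (nat \<Rightarrow> real) \<Rightarrow> (nat \<Rightarrow> real) \<Rightarrow> (nat \<Rightarrow> real) \<Rightarrow>
   complex^2^2 \<Rightarrow> complex^2^2 \<Rightarrow> real list" where
  "eig_list N f q w A B =
     sorted_list_of_multiset
       (\<Sum>lam\<in>{lam::real. is_eigenvalue N f q w A B (of_real lam)}.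
          replicate_mset (eig_mult N f q w A B (of_real lam)) lam)"

end

theory Submission
  imports Defs "HOL-Computational_Algebra.Fundamental_Theorem_Algebra"
begin


abbreviation sc :: "complex \<Rightarrow> (nat \<Rightarrow> complex) \<Rightarrow> (nat \<Rightarrow> complex)" where
  "sc c y \<equiv> (\<lambda>n. c * y n)"

interpretation fv: vector_space "\<lambda>(c::complex) (y::nat \<Rightarrow> complex). (\<lambda>n. c * y n)"
  by unfold_locales (auto simp: algebra_simps fun_eq_iff)

lemma sum_fun_apply: "(\<Sum>i\<in>I. f i) n = (\<Sum>i\<in>I. f i n)"
  by (induction I rule: infinite_finite_induct) auto

definition lc :: "(nat \<Rightarrow> complex) \<Rightarrow> (nat \<Rightarrow> complex) list \<Rightarrow> nat \<Rightarrow> complex" where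
  "lc c xs = (\<Sum>i<length xs. sc (c i) (xs!i))"

lemma lc_apply: "lc c xs n = (\<Sum>i<length xs. c i * (xs!i) n)"
  by (simp add: lc_def sum_fun_apply)

definition lindep :: "(nat \<Rightarrow> complex) list \<Rightarrow> bool" where
  "lindep xs \<longleftrightarrow> (\<forall>c. lc c xs = 0 \<longrightarrow> (\<forall>i<length xs. c i = 0))"

lemma sum_set_nth: "distinct xs \<Longrightarrow> (\<Sum>v\<in>set xs. g v) = (\<Sum>i<length xs. g (xs!i))"
  by (simp add: sum.distinct_set_conv_list sum_list_sum_nth atLeast0LessThan)

lemma lindep_distinct: assumes "lindep xs" shows "distinct xs"
proof (rule ccontr)
  assume "\<not> distinct xs"
  then obtain i j where ij: "i < length xs" "j < length xs" "i \<noteq> j" "xs!i = xs!j"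
    by (auto simp: distinct_conv_nth)
  define c where "c = (\<lambda>k. if k = i then 1 else if k = j then -1 else (0::complex))"
  have "lc c xs n = 0" for n
  proof -
    have "lc c xs n = (\<Sum>k\<in>{i,j}. c k * (xs!k) n)"
      unfolding lc_apply
      by (rule sum.mono_neutral_right) (use ij in \<open>auto simp: c_def\<close>)
    also have "\<dots> = 0" using ij by (simp add: c_def)
    finally show ?thesis .
  qed
  then have "lc c xs = 0" by auto
  with assms ij have "c i = 0" unfolding lindep_def by blast
  then show False by (simp add: c_def)
qed

lemma lindep_independent: assumes "lindep xs" shows "fv.independent (set xs)"
proof (rule fv.independent_if_scalars_zero)
  show "finite (set xs)" by simp
  fix f x assume s: "(\<Sum>x\<in>set xs. (\<lambda>n. f x * x n)) = 0" and x: "x \<in> set xs"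
  have d: "distinct xs" using assms lindep_distinct by blast
  have "lc (\<lambda>i. f (xs!i)) xs = 0"
    using s unfolding lc_def sum_set_nth[OF d] .
  then have "\<forall>i<length xs. f (xs!i) = 0" using assms unfolding lindep_def by blast
  then show "f x = 0" using x by (metis in_set_conv_nth)
qed

lemma lindep_length_le:
  assumes "lindep xs" "set xs \<subseteq> fv.span F" "finite F"
  shows "length xs \<le> card F"
  using fv.independent_span_bound[OF assms(3) lindep_independent[OF assms(1)] assms(2)]
    distinct_card[OF lindep_distinct[OF assms(1)]] by simp

lemma lc_in_span: "lc c xs \<in> fv.span (set xs)"
  unfolding lc_def by (intro fv.span_sum fv.span_scale fv.span_base) simp

lemma span_lc: assumes "distinct xs" "x \<in> fv.span (set xs)" shows "\<exists>c. x = lc c xs"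
proof -
  obtain u where "x = (\<Sum>v\<in>set xs. (\<lambda>n. u v * v n))"
    using assms(2) fv.span_finite[of "set xs"] by auto
  then have "x = lc (\<lambda>i. u (xs!i)) xs" unfolding lc_def sum_set_nth[OF assms(1)] .
  then show ?thesis by blast
qed


definition pop :: "((nat \<Rightarrow> complex) \<Rightarrow> (nat \<Rightarrow> complex)) \<Rightarrow> complex poly \<Rightarrow> (nat \<Rightarrow> complex) \<Rightarrow> (nat \<Rightarrow> complex)" where
  "pop \<Phi> p z = (\<Sum>k\<le>degree p. sc (coeff p k) ((\<Phi>^^k) z))"

lemma pop_big: assumes "degree p \<le> n"
  shows "pop \<Phi> p z = (\<Sum>k\<le>n. sc (coeff p k) ((\<Phi>^^k) z))"
  unfolding pop_def
proof (rule sum.mono_neutral_left)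
  show "\<forall>i\<in>{..n} - {..degree p}. sc (coeff p i) ((\<Phi> ^^ i) z) = 0"
    by (auto simp: coeff_eq_0 fun_eq_iff)
qed (use assms in auto)

locale axl =
  fixes S :: "(nat \<Rightarrow> complex) set" and \<Phi> :: "(nat \<Rightarrow> complex) \<Rightarrow> (nat \<Rightarrow> complex)"
  assumes S: "fv.subspace S"
    and Phi_S: "\<And>z. z \<in> S \<Longrightarrow> \<Phi> z \<in> S"
    and Phi_add: "\<And>z y. z \<in> S \<Longrightarrow> y \<in> S \<Longrightarrow> \<Phi> (z + y) = \<Phi> z + \<Phi> y"
    and Phi_sc: "\<And>z c. z \<in> S \<Longrightarrow> \<Phi> (sc c z) = sc c (\<Phi> z)"
begin

lemma pow_S: "z \<in> S \<Longrightarrow> (\<Phi>^^k) z \<in> S"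
  by (induction k) (auto intro: Phi_S)

lemma Phi_sum: assumes "finite I" "\<And>i. i \<in> I \<Longrightarrow> w i \<in> S"
  shows "\<Phi> (\<Sum>i\<in>I. sc (a i) (w i)) = (\<Sum>i\<in>I. sc (a i) (\<Phi> (w i)))"
  using assms
proof (induction I rule: finite_induct)
  case empty
  have e: "sc 0 0 = (0::nat\<Rightarrow>complex)" by (simp add: fun_eq_iff)
  have "\<Phi> 0 = 0" using Phi_sc[of 0 0] fv.subspace_0[OF S] unfolding e by (simp add: zero_fun_def)
  then show ?case by (simp add: zero_fun_def)
next
  case (insert x F)
  have s: "(\<Sum>i\<in>F. sc (a i) (w i)) \<in> S"
    using insert by (intro fv.subspace_sum[OF S] fv.subspace_scale[OF S]) auto
  have "\<Phi> (\<Sum>i\<in>insert x F. sc (a i) (w i)) = \<Phi> (sc (a x) (w x) + (\<Sum>i\<in>F. sc (a i) (w i)))"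
    by (simp only: sum.insert[OF insert(1,2)])
  also have "\<dots> = \<Phi> (sc (a x) (w x)) + \<Phi> (\<Sum>i\<in>F. sc (a i) (w i))"
    using insert s by (intro Phi_add fv.subspace_scale[OF S]) auto
  also have "\<dots> = sc (a x) (\<Phi> (w x)) + (\<Sum>i\<in>F. sc (a i) (\<Phi> (w i)))"
  proof -
    have A: "\<Phi> (sc (a x) (w x)) = sc (a x) (\<Phi> (w x))" using Phi_sc insert.prems by simp
    have B: "\<Phi> (\<Sum>i\<in>F. sc (a i) (w i)) = (\<Sum>i\<in>F. sc (a i) (\<Phi> (w i)))" using insert by simp
    show ?thesis by (simp only: A B)
  qed
  finally show ?case by (simp only: sum.insert[OF insert(1,2)])
qed

lemma pop_S: "z \<in> S \<Longrightarrow> pop \<Phi> p z \<in> S"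
  unfolding pop_def by (intro fv.subspace_sum[OF S] fv.subspace_scale[OF S] pow_S)

lemma pop_lin: assumes z: "z \<in> S"
  shows "pop \<Phi> ([:-c,1:] * r) z = \<Phi> (pop \<Phi> r z) - sc c (pop \<Phi> r z)"
proof -
  define d where "d = degree r"
  have eq: "[:-c,1:] * r = pCons 0 r - smult c r"
    by (simp add: mult_pCons_left)
  have deg: "degree ([:-c,1:] * r) \<le> Suc d"
    unfolding d_def using degree_mult_le[of "[:-c,1:]" r] by auto
  have cf: "coeff ([:-c,1:] * r) k = (case k of 0 \<Rightarrow> 0 | Suc j \<Rightarrow> coeff r j) - c * coeff r k" for k
    unfolding eq by (simp add: coeff_pCons split: nat.splits)
  have "\<Phi> (pop \<Phi> r z) = (\<Sum>k\<le>d. sc (coeff r k) (\<Phi> ((\<Phi>^^k) z)))"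
    unfolding pop_def d_def by (rule Phi_sum) (auto intro: pow_S z)
  also have "\<dots> = (\<Sum>k\<le>d. sc (coeff r k) ((\<Phi>^^(Suc k)) z))" by simp
  finally have A: "\<Phi> (pop \<Phi> r z) = (\<Sum>k\<le>d. sc (coeff r k) ((\<Phi>^^(Suc k)) z))" .
  have B: "pop \<Phi> r z = (\<Sum>k\<le>Suc d. sc (coeff r k) ((\<Phi>^^k) z))"
    by (rule pop_big) (simp add: d_def)
  show ?thesis
  proof
    fix n
    have "pop \<Phi> ([:-c,1:] * r) z n = (\<Sum>k\<le>Suc d. coeff ([:-c,1:] * r) k * (\<Phi>^^k) z n)"
      using pop_big[OF deg] by (simp add: sum_fun_apply)
    also have "\<dots> = (\<Sum>k\<le>Suc d. (case k of 0 \<Rightarrow> 0 | Suc j \<Rightarrow> coeff r j) * (\<Phi>^^k) z n)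
                    - c * (\<Sum>k\<le>Suc d. coeff r k * (\<Phi>^^k) z n)"
      unfolding cf by (simp add: algebra_simps sum_subtractf sum_distrib_left)
    also have "(\<Sum>k\<le>Suc d. (case k of 0 \<Rightarrow> 0 | Suc j \<Rightarrow> coeff r j) * (\<Phi>^^k) z n)
               = (\<Sum>k\<le>d. coeff r k * (\<Phi>^^(Suc k)) z n)"
      by (subst sum.atMost_Suc_shift) simp
    finally show "pop \<Phi> ([:-c,1:] * r) z n = (\<Phi> (pop \<Phi> r z) - sc c (pop \<Phi> r z)) n"
      using A B by (simp add: sum_fun_apply)
  qed
qed

lemma eig_from_poly:
  assumes v: "v \<in> S" "v \<noteq> 0"
  shows "r \<noteq> 0 \<Longrightarrow> pop \<Phi> r v = 0 \<Longrightarrow> \<exists>x\<in>S. x \<noteq> 0 \<and> (\<exists>\<mu>. \<Phi> x = sc \<mu> x)"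
proof (induction "degree r" arbitrary: r rule: less_induct)
  case less
  show ?case
  proof (cases "degree r = 0")
    case True
    have "pop \<Phi> r v = sc (coeff r 0) v" unfolding pop_def True by simp
    moreover have "coeff r 0 \<noteq> 0" using less.prems True leading_coeff_neq_0[of r] by simp
    ultimately have "v = 0" using less.prems by (auto simp: fun_eq_iff)
    with v show ?thesis by simp
  next
    case False
    then have "\<not> constant (poly r)" by (simp add: constant_degree)
    then obtain z0 where "poly r z0 = 0" using fundamental_theorem_of_algebra by blast
    then obtain r' where r': "r = [:-z0,1:] * r'" by (auto simp: poly_eq_0_iff_dvd dvd_def)
    have r'0: "r' \<noteq> 0" using less.prems r' by auto
    have "degree r = Suc (degree r')" unfolding r' using r'0 by (subst degree_mult_eq) auto
    then have dl: "degree r' < degree r" by simp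
    have eq: "\<Phi> (pop \<Phi> r' v) - sc z0 (pop \<Phi> r' v) = 0"
      using less.prems pop_lin[OF v(1), of z0 r'] r' by simp
    show ?thesis
    proof (cases "pop \<Phi> r' v = 0")
      case True
      then show ?thesis using less.hyps[OF dl r'0] by blast
    next
      case False
      have "\<Phi> (pop \<Phi> r' v) = sc z0 (pop \<Phi> r' v)" using eq by (simp add: fun_eq_iff)
      then show ?thesis using False pop_S[OF v(1)] by blast
    qed
  qed
qed

lemma axler:
  assumes F: "finite F" "S \<subseteq> fv.span F" and v: "v \<in> S" "v \<noteq> 0"
  shows "\<exists>x\<in>S. x \<noteq> 0 \<and> (\<exists>\<mu>. \<Phi> x = sc \<mu> x)"
proof -
  define m where "m = card F"
  define P where "P k = (\<Phi>^^k) v" for k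
  have PS: "P k \<in> S" for k unfolding P_def by (rule pow_S[OF v(1)])
  have "\<exists>a. (\<exists>k\<le>m. a k \<noteq> 0) \<and> (\<Sum>k\<le>m. sc (a k) (P k)) = 0"
  proof (cases "inj_on P {..m}")
    case True
    have cardQ: "card (P ` {..m}) = Suc m" by (simp add: card_image[OF True])
    have "\<not> fv.independent (P ` {..m})"
    proof
      assume ind: "fv.independent (P ` {..m})"
      have sp: "P ` {..m} \<subseteq> fv.span F" using PS F(2) by blast
      have "card (P ` {..m}) \<le> card F"
        using fv.independent_span_bound[OF F(1) ind sp] by (simp only:)
      with cardQ show False unfolding m_def by simp
    qed
    then obtain u where u: "\<exists>w\<in>P ` {..m}. u w \<noteq> 0" "(\<Sum>w\<in>P ` {..m}. sc (u w) w) = 0"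
      using fv.dependent_finite[of "P ` {..m}"] by blast
    have "(\<Sum>k\<le>m. sc (u (P k)) (P k)) = (\<Sum>w\<in>P ` {..m}. sc (u w) w)"
      using sum.reindex[OF True, of "\<lambda>w. sc (u w) w"] unfolding comp_def by (rule sym)
    with u(2) have "(\<Sum>k\<le>m. sc (u (P k)) (P k)) = 0" by (simp only:)
    moreover have "\<exists>k\<le>m. u (P k) \<noteq> 0" using u(1) by blast
    ultimately show ?thesis by (intro exI[of _ "\<lambda>k. u (P k)"] conjI)
  next
    case False
    then obtain i j where ij: "i \<le> m" "j \<le> m" "i \<noteq> j" "P i = P j"
      by (auto simp: inj_on_def)
    define a where "a = (\<lambda>k. if k = i then 1 else if k = j then -1 else (0::complex))"
    have "(\<Sum>k\<le>m. sc (a k) (P k)) = (\<Sum>k\<in>{i,j}. sc (a k) (P k))"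
    proof (rule sum.mono_neutral_right)
      show "\<forall>k\<in>{..m} - {i, j}. sc (a k) (P k) = 0" by (simp add: a_def zero_fun_def)
    qed (use ij in auto)
    also have "\<dots> = 0" using ij by (simp add: a_def fun_eq_iff)
    finally have "(\<Sum>k\<le>m. sc (a k) (P k)) = 0" .
    moreover have "a i \<noteq> 0" by (simp add: a_def)
    ultimately show ?thesis using ij(1) by (intro exI[of _ a] conjI) blast+
  qed
  then obtain a where a: "\<exists>k\<le>m. a k \<noteq> 0" "(\<Sum>k\<le>m. sc (a k) (P k)) = 0" by blast
  define p where "p = (\<Sum>k\<le>m. monom (a k) k)"
  have cp: "coeff p k = (if k \<le> m then a k else 0)" for k
    unfolding p_def by (simp add: coeff_sum coeff_monom)
  have dp: "degree p \<le> m" by (rule degree_le) (simp add: cp)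
  have p0: "p \<noteq> 0"
  proof
    assume "p = 0"
    obtain k where k: "k \<le> m" "a k \<noteq> 0" using a(1) by blast
    have "coeff p k = a k" using cp k(1) by simp
    with \<open>p = 0\<close> k(2) show False by simp
  qed
  have "pop \<Phi> p v = (\<Sum>k\<le>m. sc (coeff p k) (P k))" unfolding P_def by (rule pop_big[OF dp])
  also have "\<dots> = 0" using a(2) by (simp add: cp)
  finally show ?thesis by (rule eig_from_poly[OF v p0])
qed

end


lemma lc_cong: "(\<And>i. i < length xs \<Longrightarrow> c i = d i) \<Longrightarrow> lc c xs = lc d xs"
  unfolding lc_def by (rule sum.cong) auto

lemma sc0[simp]: "sc 0 y = 0" by (simp add: fun_eq_iff)

locale sesq =
  fixes S0 :: "(nat \<Rightarrow> complex) set" and B :: "(nat \<Rightarrow> complex) \<Rightarrow> (nat \<Rightarrow> complex) \<Rightarrow> complex"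
  assumes S0: "fv.subspace S0"
    and Badd: "\<And>x y z. x \<in> S0 \<Longrightarrow> y \<in> S0 \<Longrightarrow> z \<in> S0 \<Longrightarrow> B (x + y) z = B x z + B y z"
    and Bsc: "\<And>x z c. x \<in> S0 \<Longrightarrow> z \<in> S0 \<Longrightarrow> B (sc c x) z = c * B x z"
    and Bh: "\<And>x z. x \<in> S0 \<Longrightarrow> z \<in> S0 \<Longrightarrow> B z x = cnj (B x z)"
begin

lemma S0_add: "x \<in> S0 \<Longrightarrow> y \<in> S0 \<Longrightarrow> x + y \<in> S0" using fv.subspace_add[OF S0] .
lemma S0_sc: "x \<in> S0 \<Longrightarrow> sc c x \<in> S0" using fv.subspace_scale[OF S0] .
lemma S0_0: "0 \<in> S0" using fv.subspace_0[OF S0] .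
lemma S0_diff: "x \<in> S0 \<Longrightarrow> y \<in> S0 \<Longrightarrow> x - y \<in> S0" using fv.subspace_diff[OF S0] .
lemma S0_sum: "(\<And>i. i \<in> I \<Longrightarrow> f i \<in> S0) \<Longrightarrow> sum f I \<in> S0" using fv.subspace_sum[OF S0] .
lemma S0_lc: "set xs \<subseteq> S0 \<Longrightarrow> lc c xs \<in> S0"
  unfolding lc_def by (intro S0_sum S0_sc) auto

lemma B0: "z \<in> S0 \<Longrightarrow> B 0 z = 0"
  using Bsc[OF S0_0, of z 0] by (simp add: zero_fun_def)

lemma Badd2: "x \<in> S0 \<Longrightarrow> y \<in> S0 \<Longrightarrow> z \<in> S0 \<Longrightarrow> B z (x + y) = B z x + B z y"
  using Bh[of "x + y" z] Bh[of x z] Bh[of y z] Badd[of x y z] S0_add[of x y] by simp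

lemma Bsc2: "x \<in> S0 \<Longrightarrow> z \<in> S0 \<Longrightarrow> B z (sc c x) = cnj c * B z x"
  using Bh[of "sc c x" z] Bh[of x z] Bsc[of x z c] S0_sc[of x c] by simp

lemma Bsum1: assumes "finite I" "\<And>i. i \<in> I \<Longrightarrow> f i \<in> S0" "z \<in> S0"
  shows "B (\<Sum>i\<in>I. sc (c i) (f i)) z = (\<Sum>i\<in>I. c i * B (f i) z)"
  using assms(1,2)
proof (induction I rule: finite_induct)
  case empty
  then show ?case using B0[OF assms(3)] by (simp add: zero_fun_def)
next
  case (insert x F)
  have s: "(\<Sum>i\<in>F. sc (c i) (f i)) \<in> S0"
    using insert by (intro S0_sum S0_sc) auto
  have "B (\<Sum>i\<in>insert x F. sc (c i) (f i)) z = B (sc (c x) (f x) + (\<Sum>i\<in>F. sc (c i) (f i))) z"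
    by (simp only: sum.insert[OF insert(1,2)])
  also have "\<dots> = B (sc (c x) (f x)) z + B (\<Sum>i\<in>F. sc (c i) (f i)) z"
    using insert s assms(3) by (intro Badd S0_sc) auto
  also have "\<dots> = c x * B (f x) z + (\<Sum>i\<in>F. c i * B (f i) z)"
    using insert assms(3) Bsc by simp
  finally show ?case by (simp only: sum.insert[OF insert(1,2)])
qed

lemma Bsum2: assumes "finite I" "\<And>i. i \<in> I \<Longrightarrow> f i \<in> S0" "z \<in> S0"
  shows "B z (\<Sum>i\<in>I. sc (c i) (f i)) = (\<Sum>i\<in>I. cnj (c i) * B z (f i))"
proof -
  have s: "(\<Sum>i\<in>I. sc (c i) (f i)) \<in> S0" using assms by (intro S0_sum S0_sc) auto
  have "B z (\<Sum>i\<in>I. sc (c i) (f i)) = cnj (\<Sum>i\<in>I. c i * B (f i) z)"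
    using Bh[OF s assms(3)] Bsum1[OF assms] by simp
  also have "\<dots> = (\<Sum>i\<in>I. cnj (c i) * cnj (B (f i) z))" by (simp add: cnj_sum)
  also have "\<dots> = (\<Sum>i\<in>I. cnj (c i) * B z (f i))"
    by (rule sum.cong[OF refl]) (simp add: Bh[OF assms(2) assms(3)])
  finally show ?thesis .
qed

lemma Blc1: "set xs \<subseteq> S0 \<Longrightarrow> z \<in> S0 \<Longrightarrow> B (lc c xs) z = (\<Sum>i<length xs. c i * B (xs!i) z)"
  unfolding lc_def by (rule Bsum1) auto

lemma Blc2: "set xs \<subseteq> S0 \<Longrightarrow> z \<in> S0 \<Longrightarrow> B z (lc c xs) = (\<Sum>i<length xs. cnj (c i) * B z (xs!i))"
  unfolding lc_def by (rule Bsum2) auto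

lemma diff_eq_sc: "x - y = x + sc (-1) y" by (simp add: fun_eq_iff)

lemma Bdiff1: "x \<in> S0 \<Longrightarrow> y \<in> S0 \<Longrightarrow> z \<in> S0 \<Longrightarrow> B (x - y) z = B x z - B y z"
  unfolding diff_eq_sc using Badd[of x "sc (-1) y" z] Bsc[of y z "-1"] S0_sc[of y "-1"] by simp

lemma Bdiff2: "x \<in> S0 \<Longrightarrow> y \<in> S0 \<Longrightarrow> z \<in> S0 \<Longrightarrow> B z (x - y) = B z x - B z y"
  unfolding diff_eq_sc using Badd2[of x "sc (-1) y" z] Bsc2[of y z "-1"] S0_sc[of y "-1"] by simp

lemma Breal: "x \<in> S0 \<Longrightarrow> B x x = of_real (Re (B x x))"
  using Bh[of x x] by (simp add: complex_eq_iff)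

end

definition orthG :: "((nat \<Rightarrow> complex) \<Rightarrow> (nat \<Rightarrow> complex) \<Rightarrow> complex) \<Rightarrow> (nat \<Rightarrow> complex) list \<Rightarrow> bool" where
  "orthG G xs \<longleftrightarrow> distinct xs \<and> (\<forall>x\<in>set xs. \<forall>y\<in>set xs. G x y = (if x = y then 1 else 0))"

definition eigHG :: "((nat \<Rightarrow> complex) \<Rightarrow> (nat \<Rightarrow> complex) \<Rightarrow> complex) \<Rightarrow> ((nat \<Rightarrow> complex) \<Rightarrow> (nat \<Rightarrow> complex) \<Rightarrow> complex)
   \<Rightarrow> (nat \<Rightarrow> complex) set \<Rightarrow> (nat \<Rightarrow> complex) \<Rightarrow> real \<Rightarrow> bool" where
  "eigHG H G S x l \<longleftrightarrow> (\<forall>z\<in>S. H x z = of_real l * G x z)"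

definition compG :: "((nat \<Rightarrow> complex) \<Rightarrow> (nat \<Rightarrow> complex) \<Rightarrow> complex) \<Rightarrow> (nat \<Rightarrow> complex) set \<Rightarrow> (nat \<Rightarrow> complex) \<Rightarrow> (nat \<Rightarrow> complex) set" where
  "compG G S x = {y\<in>S. G y x = 0}"

lemma orth_nth: "orthG G xs \<Longrightarrow> i < length xs \<Longrightarrow> j < length xs \<Longrightarrow> G (xs!i) (xs!j) = (if i = j then 1 else 0)"
  unfolding orthG_def by (simp add: nth_eq_iff_index_eq)

locale hpen = Hs: sesq S0 H + Gs: sesq S0 G for S0 H G +
  fixes F0 :: "(nat \<Rightarrow> complex) set"
  assumes F0: "finite F0" "S0 \<subseteq> fv.span F0"
    and Gpos: "\<And>x. x \<in> S0 \<Longrightarrow> x \<noteq> 0 \<Longrightarrow> 0 < Re (G x x)"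
begin

lemma orth_lindep: assumes "orthG G xs" "set xs \<subseteq> S0" shows "lindep xs"
  unfolding lindep_def
proof (intro allI impI)
  fix c i assume lc: "lc c xs = 0" and i: "i < length xs"
  have xi: "xs!i \<in> S0" using assms(2) i by auto
  have "G (lc c xs) (xs!i) = (\<Sum>k<length xs. c k * G (xs!k) (xs!i))"
    by (rule Gs.Blc1[OF assms(2) xi])
  also have "\<dots> = (\<Sum>k<length xs. if k = i then c k else 0)"
    by (rule sum.cong) (use orth_nth[OF assms(1)] i in auto)
  also have "\<dots> = c i" using i by simp
  finally show "c i = 0" using lc Gs.B0[OF xi] by simp
qed

lemma expansion: assumes "orthG G xs" "set xs \<subseteq> S0" "z \<in> fv.span (set xs)"
  shows "z = lc (\<lambda>i. G z (xs!i)) xs"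
proof -
  have d: "distinct xs" using assms(1) unfolding orthG_def by simp
  obtain c where z: "z = lc c xs" using span_lc[OF d assms(3)] by blast
  have "G z (xs!j) = c j" if j: "j < length xs" for j
  proof -
    have xj: "xs!j \<in> S0" using assms(2) j by auto
    have "G z (xs!j) = (\<Sum>k<length xs. c k * G (xs!k) (xs!j))"
      unfolding z by (rule Gs.Blc1[OF assms(2) xj])
    also have "\<dots> = (\<Sum>k<length xs. if k = j then c k else 0)"
      by (rule sum.cong) (use orth_nth[OF assms(1)] j in auto)
    also have "\<dots> = c j" using j by simp
    finally show ?thesis .
  qed
  then show ?thesis unfolding z by (intro lc_cong) simp
qed

definition nz :: "(nat \<Rightarrow> complex) \<Rightarrow> (nat \<Rightarrow> complex)" where
  "nz x = sc (of_real (1 / sqrt (Re (G x x)))) x"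

lemma nz_norm: assumes "x \<in> S0" "x \<noteq> 0" shows "G (nz x) (nz x) = 1"
proof -
  define g where "g = Re (G x x)"
  have g: "g > 0" using Gpos[OF assms] g_def by simp
  have gx: "G x x = of_real g" using Gs.Breal[OF assms(1)] g_def by simp
  define a where "a = (of_real (1 / sqrt g) :: complex)"
  have e1: "nz x = sc a x" unfolding nz_def a_def g_def ..
  have "G (nz x) (nz x) = a * G x (sc a x)" unfolding e1
    by (rule Gs.Bsc[OF assms(1) Gs.S0_sc[OF assms(1)]])
  also have "\<dots> = a * (cnj a * G x x)" by (simp only: Gs.Bsc2[OF assms(1) assms(1)])
  also have "\<dots> = of_real ((1 / sqrt g) * (1 / sqrt g) * g)"
    unfolding a_def gx by (simp only: complex_cnj_complex_of_real of_real_mult mult.assoc)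
  also have "(1 / sqrt g) * (1 / sqrt g) * g = 1"
  proof -
    have "sqrt g * sqrt g = g" using g by simp
    then show ?thesis using g by (simp add: field_simps)
  qed
  finally show ?thesis by simp
qed

lemma nz_S: "x \<in> S \<Longrightarrow> fv.subspace S \<Longrightarrow> nz x \<in> S"
  unfolding nz_def using fv.subspace_scale by blast

lemma nz_ne: "x \<in> S0 \<Longrightarrow> x \<noteq> 0 \<Longrightarrow> nz x \<noteq> 0"
  using nz_norm Gs.B0 Gs.S0_0 by force

lemma nz_coef: assumes "x \<in> S0" "x \<noteq> 0" shows "of_real (1 / sqrt (Re (G x x))) \<noteq> (0::complex)"
  using Gpos[OF assms] by simp

lemma nz_eig: assumes "x \<in> S0" "x \<noteq> 0" "S \<subseteq> S0" "eigHG H G S x l" shows "eigHG H G S (nz x) l"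
  unfolding eigHG_def
proof
  fix z assume z: "z \<in> S"
  then have zS0: "z \<in> S0" using assms(3) by auto
  have "H (nz x) z = of_real (1 / sqrt (Re (G x x))) * H x z"
    unfolding nz_def using Hs.Bsc[OF assms(1) zS0] .
  also have "\<dots> = of_real (1 / sqrt (Re (G x x))) * (of_real l * G x z)"
    using assms(4) z unfolding eigHG_def by simp
  also have "\<dots> = of_real l * (of_real (1 / sqrt (Re (G x x))) * G x z)" by simp
  also have "of_real (1 / sqrt (Re (G x x))) * G x z = G (nz x) z"
    unfolding nz_def by (rule Gs.Bsc[OF assms(1) zS0, symmetric])
  finally show "H (nz x) z = of_real l * G (nz x) z" .
qed

lemma nz_comp: assumes "x \<in> S0" "x \<noteq> 0" "S \<subseteq> S0" shows "compG G S (nz x) = compG G S x"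
proof -
  have "G y (nz x) = 0 \<longleftrightarrow> G y x = 0" if "y \<in> S" for y
  proof -
    have yS0: "y \<in> S0" using that assms(3) by auto
    have "G y (nz x) = cnj (of_real (1 / sqrt (Re (G x x)))) * G y x"
      unfolding nz_def by (rule Gs.Bsc2[OF assms(1) yS0])
    then show ?thesis using nz_coef[OF assms(1,2)] by simp
  qed
  then show ?thesis unfolding compG_def by auto
qed

end


lemma lc_add: "lc (\<lambda>i. a i + b i) xs = lc a xs + lc b xs"
  by (simp add: fun_eq_iff lc_apply distrib_right sum.distrib)

lemma lc_scale: "lc (\<lambda>i. c * a i) xs = sc c (lc a xs)"
  by (simp add: fun_eq_iff lc_apply sum_distrib_left mult.assoc)

context hpen begin

lemma comp_sub: assumes "fv.subspace S" "S \<subseteq> S0" "x \<in> S0" shows "fv.subspace (compG G S x)"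
proof (rule fv.subspaceI)
  show "0 \<in> compG G S x" using fv.subspace_0[OF assms(1)] Gs.B0[OF assms(3)] unfolding compG_def by simp
next
  fix y z assume yz: "y \<in> compG G S x" "z \<in> compG G S x"
  then have "y \<in> S0" "z \<in> S0" using assms(2) unfolding compG_def by auto
  then have "G (y + z) x = G y x + G z x" using assms(3) by (intro Gs.Badd)
  then show "y + z \<in> compG G S x" using yz fv.subspace_add[OF assms(1)]
    unfolding compG_def by auto
next
  fix c y assume y: "y \<in> compG G S x"
  then have "y \<in> S0" using assms(2) unfolding compG_def by auto
  then have "G (sc c y) x = c * G y x" using assms(3) by (intro Gs.Bsc)
  then show "sc c y \<in> compG G S x" using y fv.subspace_scale[OF assms(1)]
    unfolding compG_def by auto
qed

lemma extend_onb:
  assumes S: "fv.subspace S" "S \<subseteq> S0" and u: "u \<in> S" "G u u = 1"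
    and es: "orthG G es" "set es \<subseteq> compG G S u" "compG G S u \<subseteq> fv.span (set es)"
  shows "orthG G (u # es)" "set (u # es) \<subseteq> S" "S \<subseteq> fv.span (set (u # es))"
proof -
  have uS0: "u \<in> S0" using u S by auto
  have esS: "set es \<subseteq> S" using es(2) unfolding compG_def by auto
  have Geu: "G e u = 0" if "e \<in> set es" for e using es(2) that unfolding compG_def by auto
  have Gue: "G u e = 0" if "e \<in> set es" for e
    using Gs.Bh[of e u] Geu[OF that] esS S(2) uS0 that by auto
  have un: "u \<notin> set es" using Geu u(2) by force
  show "orthG G (u # es)"
    using es(1) un u(2) Geu Gue unfolding orthG_def by auto
  show "set (u # es) \<subseteq> S" using esS u by auto
  show "S \<subseteq> fv.span (set (u # es))"
  proof
    fix y assume y: "y \<in> S"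
    then have yS0: "y \<in> S0" using S by auto
    define y' where "y' = y - sc (G y u) u"
    have y'S: "y' \<in> S" unfolding y'_def
      by (intro fv.subspace_diff[OF S(1)] fv.subspace_scale[OF S(1)] y u)
    have "G y' u = G y u - G y u * G u u"
      unfolding y'_def using Gs.Bdiff1[OF yS0 Gs.S0_sc[OF uS0] uS0] Gs.Bsc[OF uS0 uS0] by simp
    then have "G y' u = 0" using u(2) by simp
    then have "y' \<in> fv.span (set es)" using es(3) y'S unfolding compG_def by auto
    then have "y' \<in> fv.span (set (u # es))" using fv.span_mono[of "set es" "set (u#es)"] by auto
    moreover have "sc (G y u) u \<in> fv.span (set (u # es))"
      by (intro fv.span_scale fv.span_base) simp
    ultimately have "y' + sc (G y u) u \<in> fv.span (set (u # es))" by (rule fv.span_add)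
    moreover have "y' + sc (G y u) u = y" unfolding y'_def by (simp add: fun_eq_iff)
    ultimately show "y \<in> fv.span (set (u # es))" by simp
  qed
qed

lemma lift:
  assumes S: "fv.subspace S" "S \<subseteq> S0" and e: "e \<in> S" "G e e = 1" "eigHG H G S e l"
    and y: "y \<in> compG G S e" "eigHG H G (compG G S e) y l'"
  shows "eigHG H G S y l'"
  unfolding eigHG_def
proof
  fix z assume z: "z \<in> S"
  have eS0: "e \<in> S0" and zS0: "z \<in> S0" using e z S by auto
  have yS: "y \<in> S" and Gye: "G y e = 0" using y unfolding compG_def by auto
  have yS0: "y \<in> S0" using yS S by auto
  define a where "a = G z e"
  define z' where "z' = z - sc a e"
  have z'S: "z' \<in> S" unfolding z'_def by (intro fv.subspace_diff[OF S(1)] fv.subspace_scale[OF S(1)] z e)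
  then have z'S0: "z' \<in> S0" using S by auto
  have "G z' e = G z e - a * G e e"
    unfolding z'_def using Gs.Bdiff1[OF zS0 Gs.S0_sc[OF eS0] eS0] Gs.Bsc[OF eS0 eS0] by simp
  then have "G z' e = 0" using e(2) a_def by simp
  then have z'c: "z' \<in> compG G S e" using z'S unfolding compG_def by auto
  have zz: "z = z' + sc a e" unfolding z'_def by (simp add: fun_eq_iff)
  have "H e y = of_real l * G e y" using e(3) yS unfolding eigHG_def by auto
  then have Hye: "H y e = 0"
    using Hs.Bh[OF eS0 yS0] Gs.Bh[OF eS0 yS0] Gye by simp
  have "H y z = H y z' + cnj a * H y e"
    unfolding zz using Hs.Badd2[OF z'S0 Gs.S0_sc[OF eS0] yS0] Hs.Bsc2[OF eS0 yS0] by simp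
  also have "\<dots> = H y z'" using Hye by simp
  also have "\<dots> = of_real l' * G y z'" using y(2) z'c unfolding eigHG_def by auto
  also have "G y z' = G y z' + cnj a * G y e" using Gye by simp
  also have "\<dots> = G y z"
    unfolding zz using Gs.Badd2[OF z'S0 Gs.S0_sc[OF eS0] yS0] Gs.Bsc2[OF eS0 yS0] by simp
  finally show "H y z = of_real l' * G y z" .
qed


lemma Lcomp:
  assumes S: "fv.subspace S" "S \<subseteq> S0" and F: "finite F" "F \<subseteq> S" "S \<subseteq> fv.span F"
    and x: "x \<in> S" "x \<noteq> 0"
  shows "\<exists>F'. finite F' \<and> card F' < card F \<and> F' \<subseteq> compG G S x \<and> compG G S x \<subseteq> fv.span F'"
proof -
  have xS0: "x \<in> S0" using x S by auto
  define g where "g = G x x"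
  have g0: "g \<noteq> 0" using Gpos[OF xS0 x(2)] g_def by auto
  define p where "p y = y - sc (G y x / g) x" for y
  have pS: "p y \<in> compG G S x" if y: "y \<in> S" for y
  proof -
    have yS0: "y \<in> S0" using y S by auto
    have "p y \<in> S" unfolding p_def by (intro fv.subspace_diff[OF S(1)] fv.subspace_scale[OF S(1)] y x)
    moreover have "G (p y) x = G y x - (G y x / g) * G x x"
      unfolding p_def using Gs.Bdiff1[OF yS0 Gs.S0_sc[OF xS0, of "G y x / g"] xS0]
        Gs.Bsc[OF xS0 xS0, of "G y x / g"] by (simp only:)
    then have "G (p y) x = 0" using g0 g_def by simp
    ultimately show ?thesis unfolding compG_def by auto
  qed
  have psum: "p (\<Sum>i\<in>I. sc (c i) (f i)) = (\<Sum>i\<in>I. sc (c i) (p (f i)))"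
    if I: "finite I" "\<And>i. i \<in> I \<Longrightarrow> f i \<in> S" for I f c
  proof
    fix n
    have fS0: "\<And>i. i \<in> I \<Longrightarrow> f i \<in> S0" using I(2) S(2) by auto
    have Gs1: "G (\<Sum>i\<in>I. sc (c i) (f i)) x = (\<Sum>i\<in>I. c i * G (f i) x)"
      by (rule Gs.Bsum1[OF I(1) fS0 xS0])
    have "p (\<Sum>i\<in>I. sc (c i) (f i)) n = (\<Sum>i\<in>I. c i * f i n) - (\<Sum>i\<in>I. c i * G (f i) x) / g * x n"
      unfolding p_def Gs1 by (simp add: sum_fun_apply)
    also have "\<dots> = (\<Sum>i\<in>I. c i * f i n) - (\<Sum>i\<in>I. c i * (G (f i) x / g * x n))"
      by (simp add: sum_divide_distrib sum_distrib_right mult.assoc)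
    also have "\<dots> = (\<Sum>i\<in>I. c i * (f i n - G (f i) x / g * x n))"
      by (simp add: right_diff_distrib sum_subtractf)
    also have "\<dots> = (\<Sum>i\<in>I. sc (c i) (p (f i))) n"
      unfolding p_def by (simp add: sum_fun_apply)
    finally show "p (\<Sum>i\<in>I. sc (c i) (f i)) n = (\<Sum>i\<in>I. sc (c i) (p (f i))) n" .
  qed
  have "x \<in> range (\<lambda>u. \<Sum>v\<in>F. sc (u v) v)" using fv.span_finite[OF F(1)] x(1) F(3) by auto
  then obtain u where xu: "x = (\<Sum>v\<in>F. sc (u v) v)" by auto
  obtain f0 where f0: "f0 \<in> F" "u f0 \<noteq> 0"
  proof (rule ccontr)
    assume "\<not> thesis"
    then have "\<forall>v\<in>F. u v = 0" using that by blast
    then have "x = 0" unfolding xu by (simp add: fun_eq_iff sum_fun_apply)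
    with x(2) show False by simp
  qed
  define F' where "F' = p ` (F - {f0})"
  have finF': "finite F'" unfolding F'_def using F(1) by simp
  have cardF': "card F' < card F"
  proof -
    have "card F' \<le> card (F - {f0})" unfolding F'_def by (rule card_image_le) (use F(1) in simp)
    also have "\<dots> < card F" using F(1) f0(1) by (rule card_Diff1_less)
    finally show ?thesis .
  qed
  have F'c: "F' \<subseteq> compG G S x" unfolding F'_def using pS F(2) by auto
  have px: "p x = 0" unfolding p_def g_def using g0 g_def by (simp add: fun_eq_iff)
  have FS: "\<And>v. v \<in> F \<Longrightarrow> v \<in> S" using F(2) by auto
  have "0 = (\<Sum>v\<in>F. sc (u v) (p v))" using px psum[of F "\<lambda>v. v" u, OF F(1) FS] xu by simp
  also have "\<dots> = sc (u f0) (p f0) + (\<Sum>v\<in>F - {f0}. sc (u v) (p v))"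
    by (rule sum.remove[OF F(1) f0(1)])
  finally have "sc (u f0) (p f0) = - (\<Sum>v\<in>F - {f0}. sc (u v) (p v))"
    by (simp add: eq_neg_iff_add_eq_0)
  moreover have "- (\<Sum>v\<in>F - {f0}. sc (u v) (p v)) \<in> fv.span F'"
    unfolding F'_def by (intro fv.span_neg fv.span_sum fv.span_scale fv.span_base) auto
  ultimately have "sc (u f0) (p f0) \<in> fv.span F'" by simp
  then have "sc (1 / u f0) (sc (u f0) (p f0)) \<in> fv.span F'" by (rule fv.span_scale)
  moreover have "sc (1 / u f0) (sc (u f0) (p f0)) = p f0" using f0(2) by (simp add: fun_eq_iff)
  ultimately have pf0: "p f0 \<in> fv.span F'" by simp
  have pF: "p v \<in> fv.span F'" if "v \<in> F" for v
  proof (cases "v = f0")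
    case True then show ?thesis using pf0 by simp
  next
    case False then have "p v \<in> F'" unfolding F'_def using that by auto
    then show ?thesis by (rule fv.span_base)
  qed
  have "compG G S x \<subseteq> fv.span F'"
  proof
    fix y assume y: "y \<in> compG G S x"
    then have yS: "y \<in> S" and Gyx: "G y x = 0" unfolding compG_def by auto
    have "y \<in> range (\<lambda>u. \<Sum>v\<in>F. sc (u v) v)" using fv.span_finite[OF F(1)] yS F(3) by auto
    then obtain c where yc: "y = (\<Sum>v\<in>F. sc (c v) v)" by auto
    have "p y = y" unfolding p_def using Gyx by (simp add: fun_eq_iff)
    then have "y = (\<Sum>v\<in>F. sc (c v) (p v))" using psum[of F "\<lambda>v. v" c, OF F(1) FS] yc by simp
    also have "\<dots> \<in> fv.span F'" by (intro fv.span_sum fv.span_scale pF)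
    finally show "y \<in> fv.span F'" .
  qed
  then show ?thesis using finF' cardF' F'c by blast
qed


lemma exists_eig:
  assumes S: "fv.subspace S" "S \<subseteq> S0" and B: "orthG G B" "set B \<subseteq> S" "S \<subseteq> fv.span (set B)"
    and v: "v \<in> S" "v \<noteq> 0"
  shows "\<exists>x\<in>S. x \<noteq> 0 \<and> (\<exists>l. eigHG H G S x l)"
proof -
  have BS0: "set B \<subseteq> S0" using B(2) S(2) by auto
  define \<Phi> where "\<Phi> z = lc (\<lambda>i. H z (B!i)) B" for z
  have spB: "fv.span (set B) \<subseteq> S" using fv.span_minimal[OF B(2) S(1)] .
  have Bi: "B!i \<in> S0" if "i < length B" for i using BS0 that by auto
  interpret ax: axl S \<Phi>
  proof
    show "fv.subspace S" by (rule S(1))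
  next
    fix z assume z: "z \<in> S"
    show "\<Phi> z \<in> S" unfolding \<Phi>_def using lc_in_span spB by blast
  next
    fix z y assume zy: "z \<in> S" "y \<in> S"
    then have "z \<in> S0" "y \<in> S0" using S by auto
    then have "\<Phi> (z + y) = lc (\<lambda>i. H z (B!i) + H y (B!i)) B"
      unfolding \<Phi>_def by (intro lc_cong) (simp add: Hs.Badd Bi)
    also have "\<dots> = \<Phi> z + \<Phi> y" unfolding \<Phi>_def by (rule lc_add)
    finally show "\<Phi> (z + y) = \<Phi> z + \<Phi> y" .
  next
    fix z c assume z: "z \<in> S"
    then have "z \<in> S0" using S by auto
    then have "\<Phi> (sc c z) = lc (\<lambda>i. c * H z (B!i)) B"
      unfolding \<Phi>_def by (intro lc_cong) (simp add: Hs.Bsc Bi)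
    also have "\<dots> = sc c (\<Phi> z)" unfolding \<Phi>_def by (rule lc_scale)
    finally show "\<Phi> (sc c z) = sc c (\<Phi> z)" .
  qed
  have "\<exists>x\<in>S. x \<noteq> 0 \<and> (\<exists>\<mu>. \<Phi> x = sc \<mu> x)"
    by (rule ax.axler[of "set B" v]) (use B(3) v in auto)
  then obtain x \<mu> where x: "x \<in> S" "x \<noteq> 0" "\<Phi> x = sc \<mu> x" by blast
  have xS0: "x \<in> S0" using x S by auto
  have GPhi: "G (\<Phi> x) y = H x y" if y: "y \<in> S" for y
  proof -
    have yS0: "y \<in> S0" using y S by auto
    have yexp: "y = lc (\<lambda>i. G y (B!i)) B" using expansion[OF B(1) BS0] y B(3) by auto
    have "G (\<Phi> x) y = (\<Sum>i<length B. H x (B!i) * G (B!i) y)"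
      unfolding \<Phi>_def by (rule Gs.Blc1[OF BS0 yS0])
    also have "\<dots> = (\<Sum>i<length B. cnj (G y (B!i)) * H x (B!i))"
      by (rule sum.cong[OF refl]) (simp add: Gs.Bh[OF yS0 Bi] mult.commute)
    also have "\<dots> = H x (lc (\<lambda>i. G y (B!i)) B)"
      by (rule Hs.Blc2[OF BS0 xS0, symmetric])
    also have "\<dots> = H x y" using yexp by simp
    finally show ?thesis .
  qed
  have Hxy: "H x y = \<mu> * G x y" if "y \<in> S" for y
  proof -
    have yS0: "y \<in> S0" using that S by auto
    have "H x y = G (sc \<mu> x) y" using GPhi[OF that] x(3) by simp
    also have "\<dots> = \<mu> * G x y" by (rule Gs.Bsc[OF xS0 yS0])
    finally show ?thesis .
  qed
  define g where "g = Re (G x x)"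
  define h where "h = Re (H x x)"
  have g: "g > 0" using Gpos[OF xS0 x(2)] g_def by simp
  have "of_real h = \<mu> * of_real g"
    using Hxy[OF x(1)] Hs.Breal[OF xS0] Gs.Breal[OF xS0] g_def h_def by simp
  then have mu: "\<mu> = of_real (h / g)" using g by (simp add: field_simps)
  have "eigHG H G S x (h / g)" unfolding eigHG_def using Hxy mu by simp
  then show ?thesis using x by blast
qed

lemma spectral_aux:
  "fv.subspace S \<Longrightarrow> S \<subseteq> S0 \<Longrightarrow> finite F \<Longrightarrow> F \<subseteq> S \<Longrightarrow> S \<subseteq> fv.span F \<Longrightarrow>
   \<exists>es lam. orthG G es \<and> set es \<subseteq> S \<and> S \<subseteq> fv.span (set es) \<and>
     (\<forall>e\<in>set es. eigHG H G S e (lam e)) \<and> length es \<le> card F"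
proof (induction "card F" arbitrary: S F rule: less_induct)
  case less
  show ?case
  proof (cases "S \<subseteq> {0}")
    case True
    then have "S \<subseteq> fv.span (set [])" by simp
    then show ?thesis
      by (intro exI[of _ "[]"] exI[of _ "\<lambda>_. 0"]) (simp add: orthG_def)
  next
    case False
    then obtain v where v: "v \<in> S" "v \<noteq> 0" by auto
    have vS0: "v \<in> S0" using v less.prems by auto
    obtain F1 where F1: "finite F1" "card F1 < card F" "F1 \<subseteq> compG G S v" "compG G S v \<subseteq> fv.span F1"
      using Lcomp[OF less.prems v] by blast
    have cS: "fv.subspace (compG G S v)" by (rule comp_sub[OF less.prems(1,2) vS0])
    have cS0: "compG G S v \<subseteq> S0" using less.prems(2) unfolding compG_def by auto
    obtain es1 lam1 where es1: "orthG G es1" "set es1 \<subseteq> compG G S v" "compG G S v \<subseteq> fv.span (set es1)"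
      using less.hyps[OF F1(2) cS cS0 F1(1,3,4)] by blast
    define u where "u = nz v"
    have u: "u \<in> S" "G u u = 1" unfolding u_def using nz_S[OF v(1) less.prems(1)] nz_norm[OF vS0 v(2)] by auto
    have cu: "compG G S u = compG G S v" unfolding u_def by (rule nz_comp[OF vS0 v(2) less.prems(2)])
    note B = extend_onb[OF less.prems(1,2) u es1(1) es1(2)[folded cu] es1(3)[folded cu]]
    have uS0: "u \<in> S0" using u less.prems by auto
    have u0: "u \<noteq> 0" using u(2) Gs.B0[OF uS0] by auto
    obtain x l where x: "x \<in> S" "x \<noteq> 0" "eigHG H G S x l"
      using exists_eig[OF less.prems(1,2) B u(1) u0] by blast
    have xS0: "x \<in> S0" using x less.prems by auto
    define e where "e = nz x"
    have e: "e \<in> S" "G e e = 1" "eigHG H G S e l"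
      unfolding e_def using nz_S[OF x(1) less.prems(1)] nz_norm[OF xS0 x(2)] nz_eig[OF xS0 x(2) less.prems(2) x(3)]
      by auto
    have eS0: "e \<in> S0" using e less.prems by auto
    have e0: "e \<noteq> 0" using e(2) Gs.B0[OF eS0] by auto
    obtain F2 where F2: "finite F2" "card F2 < card F" "F2 \<subseteq> compG G S e" "compG G S e \<subseteq> fv.span F2"
      using Lcomp[OF less.prems e(1) e0] by blast
    have cS': "fv.subspace (compG G S e)" by (rule comp_sub[OF less.prems(1,2) eS0])
    have cS0': "compG G S e \<subseteq> S0" using less.prems(2) unfolding compG_def by auto
    obtain es2 lam2 where es2: "orthG G es2" "set es2 \<subseteq> compG G S e" "compG G S e \<subseteq> fv.span (set es2)"
      "\<forall>e'\<in>set es2. eigHG H G (compG G S e) e' (lam2 e')" "length es2 \<le> card F2"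
      using less.hyps[OF F2(2) cS' cS0' F2(1,3,4)] by blast
    note C = extend_onb[OF less.prems(1,2) e(1,2) es2(1,2,3)]
    define lam where "lam = lam2(e := l)"
    have ne: "e \<notin> set es2" using C(1) unfolding orthG_def by simp
    have eigall: "\<forall>e'\<in>set (e # es2). eigHG H G S e' (lam e')"
    proof
      fix e' assume e'in: "e' \<in> set (e # es2)"
      show "eigHG H G S e' (lam e')"
      proof (cases "e' = e")
        case True then show ?thesis using e(3) unfolding lam_def by simp
      next
        case False
        then have e': "e' \<in> set es2" using e'in by simp
        then have "lam e' = lam2 e'" using ne unfolding lam_def by auto
        then show ?thesis using lift[OF less.prems(1,2) e] es2(2,4) e' by auto
      qed
    qed
    have "length (e # es2) \<le> card F" using es2(5) F2(2) by simp
    then show ?thesis using C eigall by (intro exI[of _ "e # es2"] exI[of _ lam]) simp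
  qed
qed

theorem spectral:
  "\<exists>es lam. orthG G es \<and> set es \<subseteq> S0 \<and> S0 \<subseteq> fv.span (set es) \<and> (\<forall>e\<in>set es. eigHG H G S0 e (lam e))"
proof -
  obtain Bs where Bs: "Bs \<subseteq> S0" "fv.independent Bs" "S0 \<subseteq> fv.span Bs" "card Bs = fv.dim S0"
    by (rule fv.basis_exists)
  have "Bs \<subseteq> fv.span F0" using Bs(1) F0(2) by (rule order_trans)
  then have fB: "finite Bs" using fv.independent_span_bound[OF F0(1) Bs(2)] by simp
  obtain es lam where "orthG G es" "set es \<subseteq> S0" "S0 \<subseteq> fv.span (set es)"
    "\<forall>e\<in>set es. eigHG H G S0 e (lam e)"
    using spectral_aux[OF Gs.S0 subset_refl fB Bs(1,3)] by blast
  then show ?thesis by (intro exI[of _ es] exI[of _ lam]) simp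
qed

end


lemma lc_append: "lc c (A @ B) = lc c A + lc (\<lambda>i. c (length A + i)) B"
proof -
  have "lc c (A @ B) = (\<Sum>i<length A + length B. sc (c i) ((A @ B)!i))" unfolding lc_def by simp
  also have "\<dots> = (\<Sum>i<length A. sc (c i) ((A @ B)!i)) + (\<Sum>i<length B. sc (c (length A + i)) ((A @ B)!(length A + i)))"
  proof -
    define g where "g i = sc (c i) ((A @ B)!i)" for i
    have s1: "(\<Sum>i<length A + length B. g i) = (\<Sum>i<length A. g i) + (\<Sum>i\<in>{length A..<length A + length B}. g i)"
      unfolding lessThan_atLeast0 by (rule sum.atLeastLessThan_concat[symmetric]) auto
    have s2: "(\<Sum>i\<in>{length A..<length A + length B}. g i) = (\<Sum>i<length B. g (length A + i))"
      using sum.atLeastLessThan_shift_bounds[of g 0 "length A" "length B"]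
      by (simp add: add.commute atLeast0LessThan comp_def)
    show ?thesis using s1 s2 unfolding g_def by simp
  qed
  also have "\<dots> = lc c A + lc (\<lambda>i. c (length A + i)) B"
    unfolding lc_def by (simp add: nth_append)
  finally show ?thesis .
qed

lemma orth_filter: "orthG G xs \<Longrightarrow> orthG G (filter P xs)"
  unfolding orthG_def by auto

context hpen begin

lemma quad:
  assumes A: "orthG G A" "set A \<subseteq> S0" "\<forall>e\<in>set A. eigHG H G S0 e (lam e)"
  shows "H (lc c A) (lc c A) = (\<Sum>i<length A. of_real (lam (A!i)) * (c i * cnj (c i)))"
proof -
  have y: "lc c A \<in> S0" by (rule Hs.S0_lc[OF A(2)])
  have Ai: "A!i \<in> S0" if "i < length A" for i using A(2) that by auto
  have "H (lc c A) (lc c A) = (\<Sum>i<length A. c i * H (A!i) (lc c A))"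
    by (rule Hs.Blc1[OF A(2) y])
  also have "\<dots> = (\<Sum>i<length A. of_real (lam (A!i)) * (c i * cnj (c i)))"
  proof (rule sum.cong[OF refl])
    fix i assume i: "i \<in> {..<length A}"
    have "H (A!i) (lc c A) = of_real (lam (A!i)) * G (A!i) (lc c A)"
      using A(3) i y unfolding eigHG_def by auto
    also have "G (A!i) (lc c A) = (\<Sum>j<length A. cnj (c j) * G (A!i) (A!j))"
      by (rule Gs.Blc2[OF A(2) Ai]) (use i in simp)
    also have "\<dots> = (\<Sum>j<length A. if j = i then cnj (c j) else 0)"
      by (rule sum.cong[OF refl]) (use orth_nth[OF A(1)] i in auto)
    also have "\<dots> = cnj (c i)" using i by simp
    finally show "c i * H (A!i) (lc c A) = of_real (lam (A!i)) * (c i * cnj (c i))" by simp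
  qed
  finally show ?thesis .
qed

lemma cc_real: "c * cnj c = of_real ((cmod c)^2)"
  by (simp only: complex_mult_cnj cmod_power2)

lemma quad_re:
  assumes A: "orthG G A" "set A \<subseteq> S0" "\<forall>e\<in>set A. eigHG H G S0 e (lam e)"
  shows "Re (H (lc c A) (lc c A)) = (\<Sum>i<length A. lam (A!i) * (cmod (c i))^2)"
  unfolding quad[OF A] cc_real by (simp add: Re_sum)

lemma negdef:
  assumes A: "orthG G A" "set A \<subseteq> S0" "\<forall>e\<in>set A. eigHG H G S0 e (lam e)" "\<forall>e\<in>set A. lam e < 0"
    and y: "y \<in> fv.span (set A)" "y \<noteq> 0"
  shows "Re (H y y) < 0"
proof -
  have d: "distinct A" using A(1) unfolding orthG_def by simp
  obtain c where yc: "y = lc c A" using span_lc[OF d y(1)] by blast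
  obtain i where i: "i < length A" "c i \<noteq> 0"
  proof (rule ccontr)
    assume "\<not> thesis"
    then have "\<forall>i<length A. c i = 0" using that by blast
    then have "lc c A = lc (\<lambda>_. 0) A" by (intro lc_cong) simp
    then have "y = 0" using yc by (simp add: lc_def fun_eq_iff)
    with y(2) show False by simp
  qed
  have neg: "lam (A!k) < 0" if "k < length A" for k using A(4) that by auto
  have "0 < (\<Sum>k<length A. - (lam (A!k) * (cmod (c k))^2))"
  proof (rule sum_pos2)
    show "i \<in> {..<length A}" using i by simp
    show "0 < - (lam (A!i) * (cmod (c i))^2)" using neg[OF i(1)] i(2)
      by (simp add: mult_neg_pos)
  next
    fix k assume "k \<in> {..<length A}"
    then show "0 \<le> - (lam (A!k) * (cmod (c k))^2)" using neg[of k]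
      by (simp add: mult_nonpos_nonneg less_imp_le)
  qed simp
  then have "(\<Sum>k<length A. lam (A!k) * (cmod (c k))^2) < 0" by (simp add: sum_negf)
  then show ?thesis unfolding yc quad_re[OF A(1-3)] .
qed

lemma nonneg:
  assumes A: "orthG G A" "set A \<subseteq> S0" "\<forall>e\<in>set A. eigHG H G S0 e (lam e)" "\<forall>e\<in>set A. lam e \<ge> 0"
    and y: "y \<in> fv.span (set A)"
  shows "Re (H y y) \<ge> 0"
proof -
  have d: "distinct A" using A(1) unfolding orthG_def by simp
  obtain c where yc: "y = lc c A" using span_lc[OF d y(1)] by blast
  have "(\<Sum>k<length A. lam (A!k) * (cmod (c k))^2) \<ge> 0"
    by (rule sum_nonneg) (use A(4) in auto)
  then show ?thesis unfolding yc quad_re[OF A(1-3)] .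
qed

lemma eig_coef:
  assumes x: "x \<in> S0" "eigHG H G S0 x l" and e: "e \<in> S0" "eigHG H G S0 e m" and ne: "l \<noteq> m"
  shows "G x e = 0"
proof -
  have a1: "H x e = of_real l * G x e" using x e unfolding eigHG_def by auto
  have "H e x = of_real m * G e x" using x e unfolding eigHG_def by auto
  then have a2: "H x e = of_real m * G x e"
    using Hs.Bh[OF e(1) x(1)] Gs.Bh[OF e(1) x(1)] by simp
  have "(of_real l - of_real m) * G x e = H x e - H x e"
    by (subst (1) a1, subst a2) (simp add: left_diff_distrib)
  then have lm: "(of_real l - of_real m) * G x e = 0" by simp
  have "of_real l - of_real m \<noteq> (0::complex)" using ne by simp
  then show ?thesis using lm by simp
qed

lemma eig_in_span:
  assumes es: "orthG G es" "set es \<subseteq> S0" "S0 \<subseteq> fv.span (set es)" "\<forall>e\<in>set es. eigHG H G S0 e (lam e)"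
    and x: "x \<in> S0" "eigHG H G S0 x l"
  shows "x \<in> fv.span (set (filter (\<lambda>e. lam e = l) es))"
proof -
  have "x = lc (\<lambda>i. G x (es!i)) es" using expansion[OF es(1,2)] es(3) x(1) by auto
  also have "\<dots> \<in> fv.span (set (filter (\<lambda>e. lam e = l) es))"
    unfolding lc_def
  proof (intro fv.span_sum)
    fix i assume i: "i \<in> {..<length es}"
    then have ei: "es!i \<in> set es" by simp
    show "sc (G x (es!i)) (es!i) \<in> fv.span (set (filter (\<lambda>e. lam e = l) es))"
    proof (cases "lam (es!i) = l")
      case True
      then have "es!i \<in> set (filter (\<lambda>e. lam e = l) es)" using ei by simp
      then show ?thesis by (intro fv.span_scale fv.span_base)
    next
      case False
      then have "G x (es!i) = 0" using eig_coef[OF x, of "es!i" "lam (es!i)"] es(2,4) ei by auto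
      then show ?thesis using fv.span_zero by (simp add: zero_fun_def)
    qed
  qed
  finally show ?thesis .
qed

end

lemma lindep_append:
  assumes h1: "hpen S0 H G1 F0"
    and A: "lindep A" "set A \<subseteq> S0" "\<forall>y\<in>fv.span (set A). y \<noteq> 0 \<longrightarrow> Re (H y y) < 0"
    and B: "lindep B" "set B \<subseteq> S0" "\<forall>y\<in>fv.span (set B). Re (H y y) \<ge> 0"
  shows "lindep (A @ B)"
  unfolding lindep_def
proof (intro allI impI)
  fix c k assume lc0: "lc c (A @ B) = 0" and k: "k < length (A @ B)"
  define x where "x = lc c A"
  define y where "y = lc (\<lambda>i. c (length A + i)) B"
  have xy: "x + y = 0" using lc0 lc_append[of c A B] unfolding x_def y_def by simp
  have xA: "x \<in> fv.span (set A)" unfolding x_def by (rule lc_in_span)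
  have yB: "y \<in> fv.span (set B)" unfolding y_def by (rule lc_in_span)
  have xm: "x = sc (-1) y" using xy by (simp add: fun_eq_iff eq_neg_iff_add_eq_0)
  have xB: "x \<in> fv.span (set B)" unfolding xm by (rule fv.span_scale[OF yB])
  have x0: "x = 0"
  proof (rule ccontr)
    assume "x \<noteq> 0"
    then have "Re (H x x) < 0" using A(3) xA by blast
    moreover have "Re (H x x) \<ge> 0" using B(3) xB by blast
    ultimately show False by simp
  qed
  have y0: "y = 0" using xy x0 by simp
  show "c k = 0"
  proof (cases "k < length A")
    case True
    then show ?thesis using A(1) x0 unfolding lindep_def x_def by blast
  next
    case False
    then obtain j where j: "k = length A + j" "j < length B" using k
      by (metis add_diff_inverse_nat add_less_cancel_left length_append)
    have "(\<lambda>i. c (length A + i)) j = 0" using B(1) y0 j(2) unfolding lindep_def y_def by blast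
    then show ?thesis using j(1) by simp
  qed
qed


lemma inertia_half:
  assumes h1: "hpen S0 H G1 F0" and h2: "hpen S0 H G2 F0"
    and s1: "orthG G1 es1" "set es1 \<subseteq> S0" "S0 \<subseteq> fv.span (set es1)" "\<forall>e\<in>set es1. eigHG H G1 S0 e (lam1 e)"
    and s2: "orthG G2 es2" "set es2 \<subseteq> S0" "S0 \<subseteq> fv.span (set es2)" "\<forall>e\<in>set es2. eigHG H G2 S0 e (lam2 e)"
  shows "length (filter (\<lambda>e. lam1 e < 0) es1) + length (filter (\<lambda>e. \<not> lam2 e < 0) es2) \<le> length es1"
proof -
  interpret A: hpen S0 H G1 F0 by (rule h1)
  interpret B: hpen S0 H G2 F0 by (rule h2)
  define NA where "NA = filter (\<lambda>e. lam1 e < 0) es1"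
  define PB where "PB = filter (\<lambda>e. \<not> lam2 e < 0) es2"
  have oNA: "orthG G1 NA" unfolding NA_def by (rule orth_filter[OF s1(1)])
  have oPB: "orthG G2 PB" unfolding PB_def by (rule orth_filter[OF s2(1)])
  have sNA: "set NA \<subseteq> S0" unfolding NA_def using s1(2) by auto
  have sPB: "set PB \<subseteq> S0" unfolding PB_def using s2(2) by auto
  have eNA: "\<forall>e\<in>set NA. eigHG H G1 S0 e (lam1 e)" unfolding NA_def using s1(4) by auto
  have ePB: "\<forall>e\<in>set PB. eigHG H G2 S0 e (lam2 e)" unfolding PB_def using s2(4) by auto
  have nNA: "\<forall>e\<in>set NA. lam1 e < 0" unfolding NA_def by auto
  have pPB: "\<forall>e\<in>set PB. lam2 e \<ge> 0" unfolding PB_def by auto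
  have "lindep (NA @ PB)"
  proof (rule lindep_append[OF h1])
    show "lindep NA" by (rule A.orth_lindep[OF oNA sNA])
    show "lindep PB" by (rule B.orth_lindep[OF oPB sPB])
    show "set NA \<subseteq> S0" by (rule sNA)
    show "set PB \<subseteq> S0" by (rule sPB)
    show "\<forall>y\<in>fv.span (set NA). y \<noteq> 0 \<longrightarrow> Re (H y y) < 0"
      using A.negdef[OF oNA sNA eNA nNA] by blast
    show "\<forall>y\<in>fv.span (set PB). Re (H y y) \<ge> 0"
      using B.nonneg[OF oPB sPB ePB pPB] by blast
  qed
  moreover have "set (NA @ PB) \<subseteq> fv.span (set es1)" using sNA sPB s1(3) by auto
  ultimately have "length (NA @ PB) \<le> card (set es1)" by (rule lindep_length_le) simp
  also have "\<dots> \<le> length es1" by (rule card_length)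
  finally show ?thesis unfolding NA_def PB_def by simp
qed

lemma inertia:
  assumes h1: "hpen S0 H G1 F0" and h2: "hpen S0 H G2 F0"
    and s1: "orthG G1 es1" "set es1 \<subseteq> S0" "S0 \<subseteq> fv.span (set es1)" "\<forall>e\<in>set es1. eigHG H G1 S0 e (lam1 e)"
    and s2: "orthG G2 es2" "set es2 \<subseteq> S0" "S0 \<subseteq> fv.span (set es2)" "\<forall>e\<in>set es2. eigHG H G2 S0 e (lam2 e)"
  shows "length es1 = length es2 \<and> length (filter (\<lambda>e. lam1 e < 0) es1) = length (filter (\<lambda>e. lam2 e < 0) es2)"
proof -
  interpret A: hpen S0 H G1 F0 by (rule h1)
  interpret B: hpen S0 H G2 F0 by (rule h2)
  have "length es1 \<le> card (set es2)"
    by (rule lindep_length_le[OF A.orth_lindep[OF s1(1,2)]]) (use s1(2) s2(3) in auto)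
  also have "\<dots> \<le> length es2" by (rule card_length)
  finally have l12: "length es1 \<le> length es2" .
  have "length es2 \<le> card (set es1)"
    by (rule lindep_length_le[OF B.orth_lindep[OF s2(1,2)]]) (use s2(2) s1(3) in auto)
  also have "\<dots> \<le> length es1" by (rule card_length)
  finally have l21: "length es2 \<le> length es1" .
  have h12: "length (filter (\<lambda>e. lam1 e < 0) es1) + length (filter (\<lambda>e. \<not> lam2 e < 0) es2) \<le> length es1"
    by (rule inertia_half[OF h1 h2 s1 s2])
  have h21: "length (filter (\<lambda>e. lam2 e < 0) es2) + length (filter (\<lambda>e. \<not> lam1 e < 0) es1) \<le> length es2"
    by (rule inertia_half[OF h2 h1 s2 s1])
  have c1: "length (filter (\<lambda>e. lam1 e < 0) es1) + length (filter (\<lambda>e. \<not> lam1 e < 0) es1) = length es1"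
    by (rule sum_length_filter_compl)
  have c2: "length (filter (\<lambda>e. lam2 e < 0) es2) + length (filter (\<lambda>e. \<not> lam2 e < 0) es2) = length es2"
    by (rule sum_length_filter_compl)
  show ?thesis using l12 l21 h12 h21 c1 c2 by linarith
qed


definition Mv :: "complex^2^2 \<Rightarrow> complex^2^2 \<Rightarrow> complex \<Rightarrow> complex \<Rightarrow> complex \<Rightarrow> complex \<Rightarrow> 2 \<Rightarrow> complex" where
  "Mv A B a1 a2 b1 b2 i = A$i$1 * a1 + A$i$2 * a2 + B$i$1 * b1 + B$i$2 * b2"

lemma bc_vec: "A *v vector [a1,a2] + B *v vector [b1,b2] = (0::complex^2) \<longleftrightarrow>
   Mv A B a1 a2 b1 b2 1 = 0 \<and> Mv A B a1 a2 b1 b2 2 = 0"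
  by (simp add: vec_eq_iff forall_2 matrix_vector_mult_def sum_2 Mv_def add.assoc)

lemma rank_sc:
  assumes "rank_AB_2 A B"
    and "c1 * A$1$1 + c2 * A$2$1 = 0" "c1 * A$1$2 + c2 * A$2$2 = 0"
    and "c1 * B$1$1 + c2 * B$2$1 = 0" "c1 * B$1$2 + c2 * B$2$2 = 0"
  shows "c1 = 0 \<and> c2 = 0"
proof -
  have "vector [c1, c2] v* A = (0::complex^2)" "vector [c1, c2] v* B = (0::complex^2)"
    using assms(2-5) by (simp_all add: vec_eq_iff forall_2 vector_matrix_mult_def sum_2)
  then have "vector [c1, c2] = (0::complex^2)" using assms(1) unfolding rank_AB_2_def by blast
  then have "(vector [c1, c2] :: complex^2)$1 = 0" "(vector [c1, c2] :: complex^2)$2 = 0" by simp_all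
  then show ?thesis by simp
qed

lemma sa_sc:
  assumes "self_adjoint_bc A B"
  shows "A$i$1 * cnj (A$k$2) - A$i$2 * cnj (A$k$1) = B$i$1 * cnj (B$k$2) - B$i$2 * cnj (B$k$1)"
proof -
  have "(A ** Jmat ** cadj A)$i$k = (B ** Jmat ** cadj B)$i$k"
    using assms unfolding self_adjoint_bc_def by simp
  then show ?thesis
    by (simp add: matrix_matrix_mult_def sum_2 Jmat_def cadj_def algebra_simps)
qed


definition enc :: "complex \<Rightarrow> complex \<Rightarrow> complex \<Rightarrow> complex \<Rightarrow> nat \<Rightarrow> complex" where
  "enc a1 a2 b1 b2 = (\<lambda>n. if n = 0 then a1 else if n = 1 then a2 else if n = 2 then b1 else if n = 3 then b2 else 0)"

definition Om :: "complex \<Rightarrow> complex \<Rightarrow> complex \<Rightarrow> complex \<Rightarrow> complex" where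
  "Om a1 a2 p1 p2 = a1 * cnj p2 - a2 * cnj p1"

definition ip4 :: "(nat \<Rightarrow> complex) \<Rightarrow> (nat \<Rightarrow> complex) \<Rightarrow> complex" where
  "ip4 u w = u 0 * cnj (w 0) + u 1 * cnj (w 1) + u 2 * cnj (w 2) + u 3 * cnj (w 3)"

lemma enc_simps[simp]: "enc a1 a2 b1 b2 0 = a1" "enc a1 a2 b1 b2 1 = a2" "enc a1 a2 b1 b2 2 = b1"
  "enc a1 a2 b1 b2 3 = b2" "n > 3 \<Longrightarrow> enc a1 a2 b1 b2 n = 0" "enc a1 a2 b1 b2 (Suc 0) = a2"
  by (auto simp: enc_def)

lemma ip4_self: assumes "ip4 x x = 0" shows "x 0 = 0 \<and> x 1 = 0 \<and> x 2 = 0 \<and> x 3 = 0"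
proof -
  have "Re (ip4 x x) = (cmod (x 0))^2 + (cmod (x 1))^2 + (cmod (x 2))^2 + (cmod (x 3))^2"
    unfolding ip4_def by (simp add: complex_mult_cnj cmod_power2)
  then have "(cmod (x 0))^2 + (cmod (x 1))^2 + (cmod (x 2))^2 + (cmod (x 3))^2 = 0" using assms by simp
  moreover have "(cmod (x k))^2 \<ge> 0" for k by simp
  ultimately have "(cmod (x 0))^2 = 0 \<and> (cmod (x 1))^2 = 0 \<and> (cmod (x 2))^2 = 0 \<and> (cmod (x 3))^2 = 0"
    by (smt (verit))
  then show ?thesis by simp
qed

locale bcx =
  fixes A B :: "complex^2^2"
  assumes rk: "rank_AB_2 A B" and sa: "self_adjoint_bc A B"
begin

definition M4 :: "(nat \<Rightarrow> complex) \<Rightarrow> 2 \<Rightarrow> complex" where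
  "M4 v k = Mv A B (v 0) (v 1) (v 2) (v 3) k"

definition As :: "complex \<Rightarrow> complex \<Rightarrow> 2 \<Rightarrow> complex" where
  "As d1 d2 j = cnj (A$1$j) * d1 + cnj (A$2$j) * d2"

definition Bs :: "complex \<Rightarrow> complex \<Rightarrow> 2 \<Rightarrow> complex" where
  "Bs d1 d2 j = cnj (B$1$j) * d1 + cnj (B$2$j) * d2"

definition rv :: "complex \<Rightarrow> complex \<Rightarrow> nat \<Rightarrow> complex" where
  "rv d1 d2 = enc (As d1 d2 2) (- As d1 d2 1) (- Bs d1 d2 2) (Bs d1 d2 1)"

definition rp :: "2 \<Rightarrow> nat \<Rightarrow> complex" where
  "rp k = enc (cnj (A$k$1)) (cnj (A$k$2)) (cnj (B$k$1)) (cnj (B$k$2))"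

lemma M4_lin: "M4 (\<lambda>n. a * u n + b * w n) k = a * M4 u k + b * M4 w k"
  unfolding M4_def Mv_def by (simp add: algebra_simps)

lemma rv_U: "M4 (rv d1 d2) k = 0"
proof -
  have s1: "A$k$1 * cnj (A$1$2) - A$k$2 * cnj (A$1$1) = B$k$1 * cnj (B$1$2) - B$k$2 * cnj (B$1$1)"
    by (rule sa_sc[OF sa])
  have s2: "A$k$1 * cnj (A$2$2) - A$k$2 * cnj (A$2$1) = B$k$1 * cnj (B$2$2) - B$k$2 * cnj (B$2$1)"
    by (rule sa_sc[OF sa])
  have "M4 (rv d1 d2) k = d1 * ((A$k$1 * cnj (A$1$2) - A$k$2 * cnj (A$1$1)) - (B$k$1 * cnj (B$1$2) - B$k$2 * cnj (B$1$1)))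
     + d2 * ((A$k$1 * cnj (A$2$2) - A$k$2 * cnj (A$2$1)) - (B$k$1 * cnj (B$2$2) - B$k$2 * cnj (B$2$1)))"
    unfolding M4_def Mv_def rv_def As_def Bs_def by (simp add: algebra_simps)
  also have "\<dots> = 0" using s1 s2 by simp
  finally show ?thesis .
qed

lemma ip_rp: "ip4 u (rp k) = M4 u k"
  unfolding ip4_def rp_def M4_def Mv_def by (simp add: algebra_simps)

lemma rv_lin: "rv d1 d2 n = d1 * rv 1 0 n + d2 * rv 0 1 n"
  unfolding rv_def As_def Bs_def enc_def by (simp add: algebra_simps)

lemma star:
  "Om v0 v1 (As d1 d2 2) (- As d1 d2 1) - Om v2 v3 (- Bs d1 d2 2) (Bs d1 d2 1)
    = - (cnj d1 * Mv A B v0 v1 v2 v3 1 + cnj d2 * Mv A B v0 v1 v2 v3 2)"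
  unfolding Om_def As_def Bs_def Mv_def by (simp add: algebra_simps)


lemma lc5: "lc c [x0,x1,x2,x3,x4] n = c 0 * x0 n + c 1 * x1 n + c 2 * x2 n + c 3 * x3 n + c 4 * x4 n"
  by (simp add: lc_apply eval_nat_numeral add.assoc)

lemma M4_lin3: "M4 (\<lambda>n. a * u n + b * w n + c * z n) k = a * M4 u k + b * M4 w k + c * M4 z k"
  unfolding M4_def Mv_def by (simp add: algebra_simps)

lemma ip4_lin2: "ip4 u (\<lambda>n. a * w n + b * z n) = cnj a * ip4 u w + cnj b * ip4 u z"
  unfolding ip4_def by (simp add: algebra_simps)

definition E4 :: "(nat \<Rightarrow> complex) set" where
  "E4 = (\<lambda>k. (\<lambda>n. if n = k then (1::complex) else 0)) ` {0,1,2,3}"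

lemma enc_span: "enc a1 a2 b1 b2 \<in> fv.span E4"
proof -
  have "enc a1 a2 b1 b2 = (\<Sum>k\<in>{0,1,2,3::nat}. sc (enc a1 a2 b1 b2 k) (\<lambda>n. if n = k then (1::complex) else 0))"
    by (auto simp: fun_eq_iff sum_fun_apply enc_def)
  also have "\<dots> \<in> fv.span E4" unfolding E4_def
    by (intro fv.span_sum fv.span_scale fv.span_base) auto
  finally show ?thesis .
qed

lemma card_E4: "card E4 \<le> 4"
  unfolding E4_def by (rule order_trans[OF card_image_le]) simp_all

lemma iso_aux:
  assumes v1: "Mv A B a1 a2 b1 b2 1 = 0" and v2: "Mv A B a1 a2 b1 b2 2 = 0"
  shows "\<exists>d1 d2. a1 = As d1 d2 2 \<and> a2 = - As d1 d2 1 \<and> b1 = - Bs d1 d2 2 \<and> b2 = Bs d1 d2 1"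
proof (rule ccontr)
  assume nr: "\<not> ?thesis"
  define v where "v = enc a1 a2 b1 b2"
  define L where "L = [rv 1 0, rv 0 1, v, rp 1, rp 2]"
  have Mvv: "M4 v k = 0" for k
    using exhaust_2[of k] v1 v2 unfolding M4_def v_def by auto
  have "lindep L"
    unfolding lindep_def
  proof (intro allI impI)
    fix c i assume lc0: "lc c L = 0" and i: "i < length L"
    define X where "X n = c 0 * rv 1 0 n + c 1 * rv 0 1 n + c 2 * v n" for n
    define Y where "Y n = c 3 * rp 1 n + c 4 * rp 2 n" for n
    have XY0: "X n + Y n = 0" for n
      using fun_cong[OF lc0, of n] unfolding L_def lc5 X_def Y_def by (simp add: add.assoc)
    have XY: "X n = - Y n" for n using XY0[of n] by (simp add: eq_neg_iff_add_eq_0)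
    have MX: "M4 X k = 0" for k
      unfolding X_def M4_lin3 using rv_U Mvv by simp
    have "ip4 X Y = cnj (c 3) * M4 X 1 + cnj (c 4) * M4 X 2"
      unfolding Y_def ip4_lin2 ip_rp ..
    then have "ip4 X Y = 0" using MX by simp
    moreover have "ip4 X Y = - ip4 X X" unfolding ip4_def using XY by (simp add: algebra_simps)
    ultimately have "ip4 X X = 0" by simp
    then have X0: "X 0 = 0" "X 1 = 0" "X 2 = 0" "X 3 = 0" using ip4_self by auto
    then have Y0: "Y 0 = 0" "Y 1 = 0" "Y 2 = 0" "Y 3 = 0" using XY by (metis neg_equal_0_iff_equal)+
    have c34: "cnj (c 3) = 0 \<and> cnj (c 4) = 0"
    proof (rule rank_sc[OF rk])
      show "cnj (c 3) * A$1$1 + cnj (c 4) * A$2$1 = 0" using arg_cong[OF Y0(1), of cnj] unfolding Y_def rp_def by simp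
      show "cnj (c 3) * A$1$2 + cnj (c 4) * A$2$2 = 0" using arg_cong[OF Y0(2), of cnj] unfolding Y_def rp_def by simp
      show "cnj (c 3) * B$1$1 + cnj (c 4) * B$2$1 = 0" using arg_cong[OF Y0(3), of cnj] unfolding Y_def rp_def by simp
      show "cnj (c 3) * B$1$2 + cnj (c 4) * B$2$2 = 0" using arg_cong[OF Y0(4), of cnj] unfolding Y_def rp_def by simp
    qed
    have Xr: "X n = rv (c 0) (c 1) n + c 2 * v n" for n unfolding X_def using rv_lin[of "c 0" "c 1" n] by simp
    have c2: "c 2 = 0"
    proof (rule ccontr)
      assume c2: "c 2 \<noteq> 0"
      define d1 where "d1 = - c 0 / c 2"
      define d2 where "d2 = - c 1 / c 2"
      have vr: "v n = rv d1 d2 n" if "X n = 0" for n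
      proof -
        have "rv (c 0) (c 1) n + c 2 * v n = 0" using that Xr by simp
        moreover have "rv (c 0) (c 1) n = - c 2 * rv d1 d2 n"
          unfolding d1_def d2_def using c2 by (simp add: rv_def As_def Bs_def enc_def field_simps)
        ultimately have "c 2 * (v n - rv d1 d2 n) = 0" by (simp add: algebra_simps)
        then show ?thesis using c2 by simp
      qed
      have "a1 = As d1 d2 2" using vr[OF X0(1)] unfolding v_def rv_def by simp
      moreover have "a2 = - As d1 d2 1" using vr[OF X0(2)] unfolding v_def rv_def by simp
      moreover have "b1 = - Bs d1 d2 2" using vr[OF X0(3)] unfolding v_def rv_def by simp
      moreover have "b2 = Bs d1 d2 1" using vr[OF X0(4)] unfolding v_def rv_def by simp
      ultimately show False using nr by blast
    qed
    have R0: "rv (c 0) (c 1) n = 0" if "X n = 0" for n using that Xr c2 by simp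
    have c01: "cnj (c 0) = 0 \<and> cnj (c 1) = 0"
    proof (rule rank_sc[OF rk])
      have "As (c 0) (c 1) 1 = 0" using R0[OF X0(2)] unfolding rv_def by simp
      then show "cnj (c 0) * A$1$1 + cnj (c 1) * A$2$1 = 0" using arg_cong[of _ _ cnj] unfolding As_def
        by (metis (no_types, lifting) complex_cnj_add complex_cnj_cnj complex_cnj_mult complex_cnj_zero mult.commute)
      have "As (c 0) (c 1) 2 = 0" using R0[OF X0(1)] unfolding rv_def by simp
      then show "cnj (c 0) * A$1$2 + cnj (c 1) * A$2$2 = 0" unfolding As_def
        by (metis (no_types, lifting) complex_cnj_add complex_cnj_cnj complex_cnj_mult complex_cnj_zero mult.commute)
      have "Bs (c 0) (c 1) 1 = 0" using R0[OF X0(4)] unfolding rv_def by simp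
      then show "cnj (c 0) * B$1$1 + cnj (c 1) * B$2$1 = 0" unfolding Bs_def
        by (metis (no_types, lifting) complex_cnj_add complex_cnj_cnj complex_cnj_mult complex_cnj_zero mult.commute)
      have "Bs (c 0) (c 1) 2 = 0" using R0[OF X0(3)] unfolding rv_def by simp
      then show "cnj (c 0) * B$1$2 + cnj (c 1) * B$2$2 = 0" unfolding Bs_def
        by (metis (no_types, lifting) complex_cnj_add complex_cnj_cnj complex_cnj_mult complex_cnj_zero mult.commute)
    qed
    have "i < 5" using i unfolding L_def by simp
    then have "i = 0 \<or> i = 1 \<or> i = 2 \<or> i = 3 \<or> i = 4" by auto
    then show "c i = 0" using c34 c2 c01 by auto
  qed
  moreover have "set L \<subseteq> fv.span E4" unfolding L_def rv_def rp_def v_def using enc_span by auto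
  moreover have "finite E4" unfolding E4_def by simp
  ultimately have "length L \<le> card E4" by (rule lindep_length_le)
  with card_E4 show False unfolding L_def by simp
qed

lemma isotropy:
  assumes "Mv A B a1 a2 b1 b2 1 = 0" "Mv A B a1 a2 b1 b2 2 = 0"
    and "Mv A B p1 p2 r1 r2 1 = 0" "Mv A B p1 p2 r1 r2 2 = 0"
  shows "Om a1 a2 p1 p2 = Om b1 b2 r1 r2"
proof -
  obtain d1 d2 where d: "p1 = As d1 d2 2" "p2 = - As d1 d2 1" "r1 = - Bs d1 d2 2" "r2 = Bs d1 d2 1"
    using iso_aux[OF assms(3,4)] by blast
  have "Om a1 a2 p1 p2 - Om b1 b2 r1 r2 = - (cnj d1 * Mv A B a1 a2 b1 b2 1 + cnj d2 * Mv A B a1 a2 b1 b2 2)"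
    unfolding d by (rule star)
  then show ?thesis using assms(1,2) by simp
qed

lemma maximal:
  "Om a1 a2 (As 1 0 2) (- As 1 0 1) - Om b1 b2 (- Bs 1 0 2) (Bs 1 0 1) = - Mv A B a1 a2 b1 b2 1"
  "Om a1 a2 (As 0 1 2) (- As 0 1 1) - Om b1 b2 (- Bs 0 1 2) (Bs 0 1 1) = - Mv A B a1 a2 b1 b2 2"
  using star[of a1 a2 1 0 b1 b2] star[of a1 a2 0 1 b1 b2] by simp_all

lemma rv_Mv: "Mv A B (As d1 d2 2) (- As d1 d2 1) (- Bs d1 d2 2) (Bs d1 d2 1) k = 0"
  using rv_U[of d1 d2 k] unfolding M4_def rv_def by simp

end


locale slp = bcx A B for A B +
  fixes N :: nat and f q :: "nat \<Rightarrow> real"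
  assumes N2: "N \<ge> 2" and fnz: "\<forall>n\<in>{0..N}. f n \<noteq> 0"
begin

definition bcs :: "(nat \<Rightarrow> complex) \<Rightarrow> 2 \<Rightarrow> complex" where
  "bcs y k = Mv A B (y 0) (of_real (f 0) * fwd_diff y 0) (y N) (of_real (f N) * fwd_diff y N) k"

definition D :: "(nat \<Rightarrow> complex) set" where
  "D = {y. (\<forall>n>N+1. y n = 0) \<and> bcs y 1 = 0 \<and> bcs y 2 = 0}"

definition Top :: "(nat \<Rightarrow> complex) \<Rightarrow> nat \<Rightarrow> complex" where
  "Top y n = - (of_real (f n) * fwd_diff y n - of_real (f (n-1)) * fwd_diff y (n-1)) + of_real (q n) * y n"

lemma sl_eq: "sl_solutions N f q w A B lam = {y\<in>D. \<forall>n\<in>{1..N}. Top y n = lam * of_real (w n) * y n}"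
  unfolding sl_solutions_def D_def Top_def bcs_def bc_vec by auto

definition Cb :: "(nat \<Rightarrow> complex) \<Rightarrow> (nat \<Rightarrow> complex) \<Rightarrow> nat \<Rightarrow> complex" where
  "Cb y z n = y n * cnj (of_real (f n) * fwd_diff z n) - of_real (f n) * fwd_diff y n * cnj (z n)"

lemma green_tel:
  "(\<Sum>n\<in>{1..M}. Top y n * cnj (z n) - y n * cnj (Top z n)) = Cb y z M - Cb y z 0"
proof (induction M)
  case 0
  then show ?case by simp
next
  case (Suc M)
  have "(\<Sum>n\<in>{1..Suc M}. Top y n * cnj (z n) - y n * cnj (Top z n))
      = (\<Sum>n\<in>{1..M}. Top y n * cnj (z n) - y n * cnj (Top z n))
        + (Top y (Suc M) * cnj (z (Suc M)) - y (Suc M) * cnj (Top z (Suc M)))"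
    by (simp add: atLeastAtMostSuc_conv add.commute)
  also have "Top y (Suc M) * cnj (z (Suc M)) - y (Suc M) * cnj (Top z (Suc M)) = Cb y z (Suc M) - Cb y z M"
    unfolding Top_def Cb_def fwd_diff_def by (simp add: algebra_simps)
  finally show ?case using Suc by simp
qed

definition h :: "(nat \<Rightarrow> complex) \<Rightarrow> (nat \<Rightarrow> complex) \<Rightarrow> complex" where
  "h y z = (\<Sum>n\<in>{1..N}. Top y n * cnj (z n))"

lemma Cb_Om: "Cb y z n = Om (y n) (of_real (f n) * fwd_diff y n) (z n) (of_real (f n) * fwd_diff z n)"
  unfolding Cb_def Om_def by simp

lemma green: assumes "y \<in> D" "z \<in> D" shows "h y z = cnj (h z y)"
proof -
  have "Cb y z 0 = Cb y z N"
    unfolding Cb_Om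
    by (rule isotropy) (use assms in \<open>auto simp: D_def bcs_def\<close>)
  then have "(\<Sum>n\<in>{1..N}. Top y n * cnj (z n) - y n * cnj (Top z n)) = 0"
    using green_tel[where M = N and y = y and z = z] by simp
  then have "h y z - (\<Sum>n\<in>{1..N}. y n * cnj (Top z n)) = 0"
    unfolding h_def by (simp add: sum_subtractf)
  moreover have "(\<Sum>n\<in>{1..N}. y n * cnj (Top z n)) = cnj (h z y)"
    unfolding h_def by (simp add: cnj_sum mult.commute)
  ultimately show ?thesis by simp
qed


lemma bcs_add: "bcs (y + z) k = bcs y k + bcs z k"
  unfolding bcs_def Mv_def fwd_diff_def by (simp add: algebra_simps)
lemma bcs_sc: "bcs (sc c y) k = c * bcs y k"
  unfolding bcs_def Mv_def fwd_diff_def by (simp add: algebra_simps)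
lemma Top_add: "Top (y + z) n = Top y n + Top z n"
  unfolding Top_def fwd_diff_def by (simp add: algebra_simps)
lemma Top_sc: "Top (sc c y) n = c * Top y n"
  unfolding Top_def fwd_diff_def by (simp add: algebra_simps)
lemma Top_diff: "Top (y - z) n = Top y n - Top z n"
  unfolding Top_def fwd_diff_def by (simp add: algebra_simps)
lemma h_add: "h (y + z) w = h y w + h z w"
  unfolding h_def Top_add by (simp add: distrib_right sum.distrib)
lemma h_sc: "h (sc c y) w = c * h y w"
  unfolding h_def Top_sc by (simp add: sum_distrib_left mult.assoc)
lemma h_diff: "h (y - z) w = h y w - h z w"
  unfolding h_def Top_diff by (simp add: left_diff_distrib sum_subtractf)

lemma D_sub: "fv.subspace D"
proof (rule fv.subspaceI)
  show "0 \<in> D" unfolding D_def bcs_def Mv_def fwd_diff_def by simp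
next
  fix y z assume "y \<in> D" "z \<in> D"
  then show "y + z \<in> D" unfolding D_def using bcs_add by auto
next
  fix c y assume "y \<in> D"
  then show "sc c y \<in> D" unfolding D_def using bcs_sc by auto
qed

definition Pi :: "(nat \<Rightarrow> complex) \<Rightarrow> (nat \<Rightarrow> complex)" where
  "Pi y = (\<lambda>n. if n \<in> {1..N} then y n else 0)"

definition X :: "(nat \<Rightarrow> complex) set" where "X = Pi ` D"

lemma h_Pi: "h y (Pi z) = h y z"
  unfolding h_def Pi_def by (rule sum.cong) auto

lemma Pi_add: "Pi (y + z) = Pi y + Pi z" unfolding Pi_def by (simp add: fun_eq_iff)
lemma Pi_sc: "Pi (sc c y) = sc c (Pi y)" unfolding Pi_def by (simp add: fun_eq_iff)
lemma Pi_diff: "Pi (y - z) = Pi y - Pi z" unfolding Pi_def by (simp add: fun_eq_iff)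

lemma X_sub: "fv.subspace X"
proof (rule fv.subspaceI)
  have "Pi 0 = 0" unfolding Pi_def by (simp add: fun_eq_iff)
  then show "0 \<in> X" unfolding X_def using fv.subspace_0[OF D_sub] by force
next
  fix x x' assume "x \<in> X" "x' \<in> X"
  then obtain y y' where "y \<in> D" "y' \<in> D" "x = Pi y" "x' = Pi y'" unfolding X_def by auto
  then show "x + x' \<in> X" unfolding X_def using Pi_add fv.subspace_add[OF D_sub] by (metis image_eqI)
next
  fix c x assume "x \<in> X"
  then obtain y where "y \<in> D" "x = Pi y" unfolding X_def by auto
  then show "sc c x \<in> X" unfolding X_def using Pi_sc fv.subspace_scale[OF D_sub] by (metis image_eqI)
qed

lemma kernel_h: assumes "y \<in> D" "\<forall>n\<in>{1..N}. y n = 0" "z \<in> D" shows "h y z = 0"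
proof -
  have "h z y = 0" unfolding h_def using assms(2) by simp
  then show ?thesis using green[OF assms(1,3)] by simp
qed

definition sig :: "(nat \<Rightarrow> complex) \<Rightarrow> (nat \<Rightarrow> complex)" where
  "sig x = (SOME y. y \<in> D \<and> Pi y = x)"

lemma sig: assumes "x \<in> X" shows "sig x \<in> D" "Pi (sig x) = x"
proof -
  have "\<exists>y. y \<in> D \<and> Pi y = x" using assms unfolding X_def by auto
  then have "sig x \<in> D \<and> Pi (sig x) = x" unfolding sig_def by (rule someI_ex)
  then show "sig x \<in> D" "Pi (sig x) = x" by auto
qed

definition Hf :: "(nat \<Rightarrow> complex) \<Rightarrow> (nat \<Rightarrow> complex) \<Rightarrow> complex" where
  "Hf x z = h (sig x) z"

lemma Hf_eq: assumes y: "y \<in> D" and z: "z \<in> X" shows "Hf (Pi y) z = h y z"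
proof -
  have Piy: "Pi y \<in> X" unfolding X_def using y by auto
  define u where "u = sig (Pi y) - y"
  have uD: "u \<in> D" unfolding u_def by (rule fv.subspace_diff[OF D_sub sig(1)[OF Piy] y])
  have Pu: "Pi u = 0" unfolding u_def Pi_diff sig(2)[OF Piy] by simp
  have u0: "\<forall>n\<in>{1..N}. u n = 0"
  proof
    fix n assume n: "n \<in> {1..N}"
    have "Pi u n = 0" using Pu by simp
    then show "u n = 0" using n unfolding Pi_def by simp
  qed
  obtain z' where z': "z' \<in> D" "z = Pi z'" using z unfolding X_def by auto
  have "h u z = 0" unfolding z'(2) h_Pi by (rule kernel_h[OF uD u0 z'(1)])
  then show ?thesis unfolding Hf_def using h_diff[of "sig (Pi y)" y z] u_def by simp
qed

lemma Hf_herm: assumes "x \<in> X" "z \<in> X" shows "Hf z x = cnj (Hf x z)"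
proof -
  have "Hf z x = h (sig z) (sig x)" unfolding Hf_def using h_Pi[of "sig z" "sig x"] sig(2)[OF assms(1)] by simp
  also have "\<dots> = cnj (h (sig x) (sig z))" by (rule green[OF sig(1)[OF assms(2)] sig(1)[OF assms(1)]])
  also have "h (sig x) (sig z) = Hf x z" unfolding Hf_def using h_Pi[of "sig x" "sig z"] sig(2)[OF assms(2)] by simp
  finally show ?thesis .
qed

lemma sesqH: "sesq X Hf"
proof
  show "fv.subspace X" by (rule X_sub)
next
  fix x y z assume xyz: "x \<in> X" "y \<in> X" "z \<in> X"
  have "x + y = Pi (sig x + sig y)" using sig(2) xyz Pi_add by simp
  then have "Hf (x + y) z = h (sig x + sig y) z"
    using Hf_eq[OF fv.subspace_add[OF D_sub sig(1)[OF xyz(1)] sig(1)[OF xyz(2)]] xyz(3)] by simp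
  then show "Hf (x + y) z = Hf x z + Hf y z" unfolding Hf_def h_add .
next
  fix x z c assume xz: "x \<in> X" "z \<in> X"
  have "sc c x = Pi (sc c (sig x))" using sig(2)[OF xz(1)] Pi_sc by simp
  then have "Hf (sc c x) z = h (sc c (sig x)) z"
    using Hf_eq[OF fv.subspace_scale[OF D_sub sig(1)[OF xz(1)]] xz(2)] by simp
  then show "Hf (sc c x) z = c * Hf x z" unfolding Hf_def h_sc .
next
  fix x z assume "x \<in> X" "z \<in> X"
  then show "Hf z x = cnj (Hf x z)" by (rule Hf_herm)
qed

definition Gw :: "(nat \<Rightarrow> real) \<Rightarrow> (nat \<Rightarrow> complex) \<Rightarrow> (nat \<Rightarrow> complex) \<Rightarrow> complex" where
  "Gw w x z = (\<Sum>n\<in>{1..N}. of_real (w n) * x n * cnj (z n))"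

lemma sesqG: "sesq X (Gw w)"
proof
  show "fv.subspace X" by (rule X_sub)
next
  fix x y z show "Gw w (x + y) z = Gw w x z + Gw w y z"
    unfolding Gw_def by (simp add: algebra_simps sum.distrib)
next
  fix x z c show "Gw w (sc c x) z = c * Gw w x z"
    unfolding Gw_def by (simp add: sum_distrib_left algebra_simps)
next
  fix x z show "Gw w z x = cnj (Gw w x z)"
    unfolding Gw_def by (simp add: cnj_sum algebra_simps)
qed

definition U1 :: "(nat \<Rightarrow> complex) set" where
  "U1 = (\<lambda>k. (\<lambda>n. if n = k then (1::complex) else 0)) ` {1..N}"

lemma X_supp: "x \<in> X \<Longrightarrow> n \<notin> {1..N} \<Longrightarrow> x n = 0"
  unfolding X_def Pi_def by auto

lemma X_span: "X \<subseteq> fv.span U1"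
proof
  fix x assume x: "x \<in> X"
  have "x = (\<Sum>k\<in>{1..N}. sc (x k) (\<lambda>n. if n = k then (1::complex) else 0))"
  proof
    fix n
    have "(\<Sum>k\<in>{1..N}. sc (x k) (\<lambda>n. if n = k then (1::complex) else 0)) n
        = (\<Sum>k\<in>{1..N}. if n = k then x k else 0)"
      unfolding sum_fun_apply by (rule sum.cong) auto
    also have "\<dots> = x n" using X_supp[OF x, of n] by simp
    finally show "x n = (\<Sum>k\<in>{1..N}. sc (x k) (\<lambda>n. if n = k then (1::complex) else 0)) n" by simp
  qed
  also have "\<dots> \<in> fv.span U1" unfolding U1_def
    by (intro fv.span_sum fv.span_scale fv.span_base) auto
  finally show "x \<in> fv.span U1" .
qed

lemma hpen_w: assumes w: "\<forall>n\<in>{1..N}. w n > 0" shows "hpen X Hf (Gw w) U1"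
proof -
  interpret Hs: sesq X Hf by (rule sesqH)
  interpret Gs: sesq X "Gw w" by (rule sesqG)
  show ?thesis
  proof
    show "finite U1" unfolding U1_def by simp
    show "X \<subseteq> fv.span U1" by (rule X_span)
  next
    fix x assume x: "x \<in> X" "x \<noteq> 0"
    then obtain n0 where n0: "x n0 \<noteq> 0" by (auto simp: fun_eq_iff)
    then have n0N: "n0 \<in> {1..N}" using X_supp[OF x(1)] by blast
    have "Re (Gw w x x) = (\<Sum>n\<in>{1..N}. w n * (cmod (x n))^2)"
      unfolding Gw_def by (simp add: Re_sum mult.assoc complex_mult_cnj cmod_power2)
    also have "\<dots> > 0"
    proof (rule sum_pos2)
      show "n0 \<in> {1..N}" by (rule n0N)
      show "0 < w n0 * (cmod (x n0))^2" using w n0N n0 by simp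
    next
      fix i assume "i \<in> {1..N}"
      then have "w i > 0" using w by auto
      then show "0 \<le> w i * (cmod (x i))^2" by simp
    qed simp
    finally show "0 < Re (Gw w x x)" .
  qed
qed

end


context slp begin

abbreviation E :: "(nat \<Rightarrow> real) \<Rightarrow> real \<Rightarrow> (nat \<Rightarrow> complex) set" where
  "E w l \<equiv> sl_solutions N f q w A B (of_real l)"

lemma corr1: assumes y: "y \<in> E w l" shows "Pi y \<in> X" "eigHG Hf (Gw w) X (Pi y) l"
proof -
  have yD: "y \<in> D" and ye: "\<forall>n\<in>{1..N}. Top y n = of_real l * of_real (w n) * y n"
    using y unfolding sl_eq by auto
  show PX: "Pi y \<in> X" unfolding X_def using yD by auto
  show "eigHG Hf (Gw w) X (Pi y) l"
    unfolding eigHG_def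
  proof
    fix z assume z: "z \<in> X"
    have "Hf (Pi y) z = h y z" by (rule Hf_eq[OF yD z])
    also have "\<dots> = (\<Sum>n\<in>{1..N}. of_real l * (of_real (w n) * Pi y n * cnj (z n)))"
      unfolding h_def by (rule sum.cong) (use ye in \<open>auto simp: Pi_def\<close>)
    also have "\<dots> = of_real l * Gw w (Pi y) z" unfolding Gw_def by (simp add: sum_distrib_left)
    finally show "Hf (Pi y) z = of_real l * Gw w (Pi y) z" .
  qed
qed

lemma f0nz: "f 0 \<noteq> 0" using fnz by auto
lemma fNnz: "f N \<noteq> 0" using fnz by auto

lemma inj_E: assumes y: "y \<in> E w l" and P: "Pi y = 0" shows "y = 0"
proof -
  have yD: "y \<in> D" and ye: "\<forall>n\<in>{1..N}. Top y n = of_real l * of_real (w n) * y n"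
    using y unfolding sl_eq by auto
  have y0N: "y n = 0" if "n \<in> {1..N}" for n
  proof -
    have "Pi y n = 0" using P by simp
    then show ?thesis using that unfolding Pi_def by simp
  qed
  have "Top y 1 = 0" using ye y0N[of 1] N2 by simp
  moreover have "Top y 1 = - (of_real (f 0) * y 0)"
    unfolding Top_def fwd_diff_def using y0N[of 1] y0N[of 2] N2 by (simp add: algebra_simps numeral_2_eq_2)
  ultimately have a: "y 0 = 0" using f0nz by simp
  have "Top y N = 0" using ye y0N[of N] N2 by simp
  moreover have "Top y N = - (of_real (f N) * y (Suc N))"
    unfolding Top_def fwd_diff_def using y0N[of N] y0N[of "N - 1"] N2 by (simp add: algebra_simps)
  ultimately have b: "y (Suc N) = 0" using fNnz by simp
  show ?thesis
  proof
    fix n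
    show "y n = 0 n"
    proof (cases "n = 0")
      case True then show ?thesis using a by simp
    next
      case False
      show ?thesis
      proof (cases "n \<le> N")
        case True then show ?thesis using y0N[of n] False by simp
      next
        case nN: False
        show ?thesis
        proof (cases "n = Suc N")
          case True then show ?thesis using b by simp
        next
          case False
          then have "n > N + 1" using nN by simp
          then show ?thesis using yD unfolding D_def by simp
        qed
      qed
    qed
  qed
qed


definition zf :: "complex \<Rightarrow> complex \<Rightarrow> complex \<Rightarrow> complex \<Rightarrow> nat \<Rightarrow> complex" where
  "zf p1 p2 r1 r2 = (\<lambda>m. if m = 0 then p1 else if m = 1 then p1 + p2 / of_real (f 0)
     else if m = N then r1 else if m = Suc N then r1 + r2 / of_real (f N) else 0)"

lemma zf_bnd:
  "zf p1 p2 r1 r2 0 = p1" "of_real (f 0) * fwd_diff (zf p1 p2 r1 r2) 0 = p2"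
  "zf p1 p2 r1 r2 N = r1" "of_real (f N) * fwd_diff (zf p1 p2 r1 r2) N = r2"
  using N2 f0nz fNnz unfolding zf_def fwd_diff_def by (auto simp: field_simps)

lemma zf_D: assumes "Mv A B p1 p2 r1 r2 1 = 0" "Mv A B p1 p2 r1 r2 2 = 0"
  shows "zf p1 p2 r1 r2 \<in> D"
  unfolding D_def bcs_def using assms zf_bnd by (auto simp: zf_def)

lemma corr2: assumes x: "x \<in> X" "eigHG Hf (Gw w) X x l" shows "\<exists>y'\<in>E w l. Pi y' = x"
proof -
  define y where "y = sig x"
  have yD: "y \<in> D" and Py: "Pi y = x" using sig[OF x(1)] y_def by auto
  define g where "g z = (\<Sum>n\<in>{1..N}. of_real (w n) * y n * cnj (z n))" for z
  have hyz: "h y z = of_real l * g z" if z: "z \<in> D" for z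
  proof -
    have PzX: "Pi z \<in> X" unfolding X_def using z by auto
    have "h y z = Hf x (Pi z)" unfolding Hf_def y_def h_Pi ..
    also have "\<dots> = of_real l * Gw w x (Pi z)" using x(2) PzX unfolding eigHG_def by auto
    also have "Gw w x (Pi z) = g z" unfolding Gw_def g_def Py[symmetric] Pi_def by (rule sum.cong) auto
    finally show ?thesis .
  qed
  define e where "e k = (\<lambda>m::nat. if m = k then (1::complex) else 0)" for k :: nat
  have interior: "Top y n = of_real l * of_real (w n) * y n" if n: "2 \<le> n" "n < N" for n
  proof -
    have eD: "e n \<in> D" unfolding D_def bcs_def Mv_def fwd_diff_def e_def using n by auto
    have "h y (e n) = (\<Sum>m\<in>{1..N}. if m = n then Top y m else 0)"
      unfolding h_def e_def by (rule sum.cong) auto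
    also have "\<dots> = Top y n" using n by simp
    finally have 1: "h y (e n) = Top y n" .
    have "g (e n) = (\<Sum>m\<in>{1..N}. if m = n then of_real (w m) * y m else 0)"
      unfolding g_def e_def by (rule sum.cong) auto
    also have "\<dots> = of_real (w n) * y n" using n by simp
    finally have 2: "g (e n) = of_real (w n) * y n" .
    show ?thesis using hyz[OF eD] 1 2 by simp
  qed
  define a0 where "a0 = y 1 - (of_real l * of_real (w 1) * y 1 + of_real (f 1) * (y 2 - y 1) - of_real (q 1) * y 1) / of_real (f 0)"
  define aN where "aN = y N + (of_real (f (N-1)) * (y N - y (N-1)) + of_real (q N) * y N - of_real l * of_real (w N) * y N) / of_real (f N)"
  define y' where "y' = y(0 := a0, Suc N := aN)"
  have y'y: "y' m = y m" if "m \<in> {1..N}" for m using that unfolding y'_def by auto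
  have y'0: "y' 0 = a0" and y'N: "y' (Suc N) = aN" unfolding y'_def by auto
  have Teq: "Top y' n = of_real l * of_real (w n) * y' n" if n: "n \<in> {1..N}" for n
  proof -
    consider "n = 1" | "n = N" | "2 \<le> n \<and> n < N" using n N2 by fastforce
    then show ?thesis
    proof cases
      case 1
      have "y' 2 = y 2" "y' 1 = y 1" using y'y N2 by auto
      then show ?thesis unfolding 1 Top_def fwd_diff_def a0_def
        using y'0 f0nz by (simp add: a0_def field_simps numeral_2_eq_2)
    next
      case 2
      have "y' (N - 1) = y (N - 1)" "y' N = y N" using y'y N2 by auto
      then show ?thesis unfolding 2 Top_def fwd_diff_def aN_def
        using y'N fNnz N2 by (simp add: aN_def field_simps)
    next
      case 3
      have "y' (Suc n) = y (Suc n)" using y'y[of "Suc n"] 3 by simp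
      moreover have "y' n = y n" using y'y[of n] 3 by simp
      moreover have "n - 1 \<in> {1..N}" using 3 by auto
      then have "y' (n - 1) = y (n - 1)" by (rule y'y)
      ultimately have "Top y' n = Top y n" unfolding Top_def fwd_diff_def using 3 by simp
      then show ?thesis using interior 3 \<open>y' n = y n\<close> by simp
    qed
  qed
  have key: "Cb y' z 0 = Cb y' z N" if zD: "z \<in> D" for z
  proof -
    have s1: "(\<Sum>n\<in>{1..N}. Top y' n * cnj (z n)) = h y z"
    proof -
      have "(\<Sum>n\<in>{1..N}. Top y' n * cnj (z n)) = (\<Sum>n\<in>{1..N}. of_real l * (of_real (w n) * y n * cnj (z n)))"
        by (rule sum.cong) (use Teq y'y in auto)
      also have "\<dots> = of_real l * g z" unfolding g_def by (simp add: sum_distrib_left)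
      finally show ?thesis using hyz[OF zD] by simp
    qed
    have s2: "(\<Sum>n\<in>{1..N}. y' n * cnj (Top z n)) = h y z"
    proof -
      have "(\<Sum>n\<in>{1..N}. y' n * cnj (Top z n)) = cnj (h z y)"
        unfolding h_def cnj_sum by (rule sum.cong) (use y'y in \<open>auto simp: mult.commute\<close>)
      also have "\<dots> = h y z" using green[OF yD zD] by simp
      finally show ?thesis .
    qed
    have "(\<Sum>n\<in>{1..N}. Top y' n * cnj (z n) - y' n * cnj (Top z n)) = 0"
      using s1 s2 by (simp add: sum_subtractf)
    then show ?thesis using green_tel[where M = N and y = y' and z = z] by simp
  qed
  have bc1: "bcs y' 1 = 0"
  proof -
    define z where "z = zf (As 1 0 2) (- As 1 0 1) (- Bs 1 0 2) (Bs 1 0 1)"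
    have zD: "z \<in> D" unfolding z_def by (rule zf_D) (rule rv_Mv)+
    have "Cb y' z 0 - Cb y' z N = - bcs y' 1"
      unfolding Cb_Om bcs_def z_def zf_bnd by (rule maximal(1))
    then show ?thesis using key[OF zD] by simp
  qed
  have bc2: "bcs y' 2 = 0"
  proof -
    define z where "z = zf (As 0 1 2) (- As 0 1 1) (- Bs 0 1 2) (Bs 0 1 1)"
    have zD: "z \<in> D" unfolding z_def by (rule zf_D) (rule rv_Mv)+
    have "Cb y' z 0 - Cb y' z N = - bcs y' 2"
      unfolding Cb_Om bcs_def z_def zf_bnd by (rule maximal(2))
    then show ?thesis using key[OF zD] by simp
  qed
  have y'D: "y' \<in> D"
    using yD bc1 bc2 unfolding D_def y'_def by auto
  have "y' \<in> E w l" unfolding sl_eq using y'D Teq by auto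
  moreover have "Pi y' = x" unfolding Py[symmetric] Pi_def using y'y by (auto simp: fun_eq_iff)
  ultimately show ?thesis by blast
qed

end


lemma msum: "(\<Sum>x\<in>set xs. replicate_mset (count (mset xs) x) x) = mset xs"
proof (rule multiset_eqI)
  fix y
  have "count (\<Sum>x\<in>set xs. replicate_mset (count (mset xs) x) x) y
      = (\<Sum>x\<in>set xs. if y = x then count (mset xs) x else 0)"
    by (simp add: count_sum)
  also have "\<dots> = count (mset xs) y" by (simp add: count_eq_zero_iff)
  finally show "count (\<Sum>x\<in>set xs. replicate_mset (count (mset xs) x) x) y = count (mset xs) y" .
qed

context slp begin

lemma E_sub: "fv.subspace (E w l)"
proof (rule fv.subspaceI)
  show "0 \<in> E w l" unfolding sl_eq using fv.subspace_0[OF D_sub]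
    by (simp add: Top_def fwd_diff_def)
next
  fix y z assume "y \<in> E w l" "z \<in> E w l"
  then show "y + z \<in> E w l" unfolding sl_eq using fv.subspace_add[OF D_sub] Top_add
    by (auto simp: algebra_simps)
next
  fix c y assume "y \<in> E w l"
  then show "sc c y \<in> E w l" unfolding sl_eq using fv.subspace_scale[OF D_sub] Top_sc
    by (auto simp: algebra_simps)
qed

lemma Pi_sum: "Pi (\<Sum>b\<in>S. sc (u b) (g b)) = (\<Sum>b\<in>S. sc (u b) (Pi (g b)))"
  unfolding Pi_def by (auto simp: fun_eq_iff sum_fun_apply)

lemma Pi_0: "Pi 0 = 0" unfolding Pi_def by (simp add: fun_eq_iff)

lemma spec_E:
  assumes w: "\<forall>n\<in>{1..N}. w n > 0"
    and es: "orthG (Gw w) es" "set es \<subseteq> X" "X \<subseteq> fv.span (set es)" "\<forall>e\<in>set es. eigHG Hf (Gw w) X e (lam e)"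
  shows "fv.dim (E w l) = length (filter (\<lambda>e. lam e = l) es)"
    and "(\<exists>y\<in>E w l. y \<noteq> 0) \<longleftrightarrow> l \<in> lam ` set es"
proof -
  interpret hp: hpen X Hf "Gw w" U1 by (rule hpen_w[OF w])
  define L where "L = filter (\<lambda>e. lam e = l) es"
  have oL: "orthG (Gw w) L" unfolding L_def by (rule orth_filter[OF es(1)])
  have sL: "set L \<subseteq> X" unfolding L_def using es(2) by auto
  have dL: "distinct L" using oL unfolding orthG_def by simp
  have indL: "fv.independent (set L)" by (rule lindep_independent[OF hp.orth_lindep[OF oL sL]])
  define \<psi> where "\<psi> e = (SOME y. y \<in> E w l \<and> Pi y = e)" for e
  have psi: "\<psi> e \<in> E w l \<and> Pi (\<psi> e) = e" if e: "e \<in> set L" for e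
  proof -
    have "e \<in> X" "eigHG Hf (Gw w) X e l" using e es(2,4) unfolding L_def by auto
    then have "\<exists>y. y \<in> E w l \<and> Pi y = e" using corr2 by blast
    then show ?thesis unfolding \<psi>_def by (rule someI_ex)
  qed
  define Bset where "Bset = \<psi> ` set L"
  have injpsi: "inj_on \<psi> (set L)" by (rule inj_on_inverseI[of _ Pi]) (use psi in auto)
  have cardB: "card Bset = length L" unfolding Bset_def using card_image[OF injpsi] distinct_card[OF dL] by simp
  have BE: "Bset \<subseteq> E w l" unfolding Bset_def using psi by auto
  have indB: "fv.independent Bset"
  proof (rule fv.independent_if_scalars_zero)
    show "finite Bset" unfolding Bset_def by simp
    fix u b assume s: "(\<Sum>b\<in>Bset. sc (u b) b) = 0" and b: "b \<in> Bset"
    have "(\<Sum>b\<in>Bset. sc (u b) (Pi b)) = 0" using arg_cong[OF s, of Pi] Pi_sum[of u "\<lambda>b. b" Bset] Pi_0 by simp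
    then have "(\<Sum>e\<in>set L. sc (u (\<psi> e)) (Pi (\<psi> e))) = 0"
      unfolding Bset_def by (simp add: sum.reindex[OF injpsi])
    then have "(\<Sum>e\<in>set L. sc (u (\<psi> e)) e) = 0"
      using psi by (simp cong: sum.cong)
    then have "\<forall>e\<in>set L. u (\<psi> e) = 0" using fv.independentD[OF indL, of "set L" "\<lambda>e. u (\<psi> e)"] by auto
    then show "u b = 0" using b unfolding Bset_def by auto
  qed
  have Ein: "y \<in> fv.span Bset" if y: "y \<in> E w l" for y
  proof -
    have PyX: "Pi y \<in> X" and Pye: "eigHG Hf (Gw w) X (Pi y) l" using corr1[OF y] by auto
    have "Pi y \<in> fv.span (set L)" unfolding L_def by (rule hp.eig_in_span[OF es PyX Pye])
    then obtain u where u: "Pi y = (\<Sum>e\<in>set L. sc (u e) e)"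
      using fv.span_finite[of "set L"] by auto
    define y2 where "y2 = (\<Sum>e\<in>set L. sc (u e) (\<psi> e))"
    have y2E: "y2 \<in> E w l" unfolding y2_def
      by (intro fv.subspace_sum[OF E_sub] fv.subspace_scale[OF E_sub]) (use psi in auto)
    have "Pi y2 = (\<Sum>e\<in>set L. sc (u e) (Pi (\<psi> e)))" unfolding y2_def by (rule Pi_sum)
    also have "\<dots> = Pi y" unfolding u using psi by (simp cong: sum.cong)
    finally have "Pi (y - y2) = 0" by (simp add: Pi_diff)
    moreover have "y - y2 \<in> E w l" by (rule fv.subspace_diff[OF E_sub y y2E])
    ultimately have "y - y2 = 0" using inj_E by blast
    then have "y = y2" by simp
    also have "y2 \<in> fv.span Bset" unfolding y2_def Bset_def
      by (intro fv.span_sum fv.span_scale fv.span_base) auto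
    finally show ?thesis .
  qed
  have "fv.span Bset = fv.span (E w l)"
  proof
    show "fv.span Bset \<subseteq> fv.span (E w l)" by (rule fv.span_mono[OF BE])
    show "fv.span (E w l) \<subseteq> fv.span Bset" using Ein by (intro fv.span_minimal) auto
  qed
  then have "fv.dim (E w l) = card Bset" using fv.dim_eq_card indB by blast
  then show "fv.dim (E w l) = length (filter (\<lambda>e. lam e = l) es)" using cardB L_def by simp
  show "(\<exists>y\<in>E w l. y \<noteq> 0) \<longleftrightarrow> l \<in> lam ` set es"
  proof
    assume "\<exists>y\<in>E w l. y \<noteq> 0"
    then obtain y where y: "y \<in> E w l" "y \<noteq> 0" by blast
    have "Pi y \<noteq> 0" using inj_E[OF y(1)] y(2) by blast
    moreover have "Pi y \<in> fv.span (set L)" unfolding L_def using corr1[OF y(1)] hp.eig_in_span[OF es] by blast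
    ultimately have "set L \<noteq> {}" by auto
    then show "l \<in> lam ` set es" unfolding L_def by auto
  next
    assume "l \<in> lam ` set es"
    then obtain e where e: "e \<in> set es" "lam e = l" by auto
    then have eL: "e \<in> set L" unfolding L_def by simp
    have "Gw w e e = 1" using es(1) e(1) unfolding orthG_def by simp
    then have "e \<noteq> 0" unfolding Gw_def by auto
    then have "\<psi> e \<noteq> 0" using psi[OF eL] Pi_0 by auto
    then show "\<exists>y\<in>E w l. y \<noteq> 0" using psi[OF eL] by blast
  qed
qed

lemma eig_list_eq:
  assumes w: "\<forall>n\<in>{1..N}. w n > 0"
    and es: "orthG (Gw w) es" "set es \<subseteq> X" "X \<subseteq> fv.span (set es)" "\<forall>e\<in>set es. eigHG Hf (Gw w) X e (lam e)"
  shows "eig_list N f q w A B = sort (map lam es)"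
proof -
  have ev: "{l. is_eigenvalue N f q w A B (of_real l)} = set (map lam es)"
    using spec_E(2)[OF w es] unfolding is_eigenvalue_def by (auto simp: zero_fun_def)
  have cl: "count_list (map lam es') l = length (filter (\<lambda>e. lam e = l) es')" for es' l
    by (induction es') auto
  have em: "eig_mult N f q w A B (of_real l) = count (mset (map lam es)) l" for l
    unfolding eig_mult_def spec_E(1)[OF w es] count_mset cl ..
  have "(\<Sum>l\<in>{l. is_eigenvalue N f q w A B (of_real l)}. replicate_mset (eig_mult N f q w A B (of_real l)) l)
      = mset (map lam es)"
    unfolding ev em by (rule msum)
  then show ?thesis unfolding eig_list_def by (simp only: sorted_list_of_multiset_mset)
qed

end


lemma count_list_filter: "count_list xs x = length (filter (\<lambda>y. y = x) xs)"
  by (induction xs) auto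

lemma sort_zero:
  fixes xs :: "real list"
  assumes j: "j < length xs"
  shows "(sort xs)!j = 0 \<longleftrightarrow>
    length (filter (\<lambda>x. x < 0) xs) \<le> j \<and> j < length (filter (\<lambda>x. x < 0) xs) + count (mset xs) 0"
proof -
  define n where "n = filter (\<lambda>x. x < 0) xs"
  define z where "z = filter (\<lambda>x. x = 0) xs"
  define p where "p = filter (\<lambda>x. x > 0) xs"
  have ms: "mset (sort n @ z @ sort p) = mset xs"
  proof -
    have "mset (filter (\<lambda>x. x < 0) xs) + mset (filter (\<lambda>x. x = 0) xs) + mset (filter (\<lambda>x. x > 0) xs) = mset xs"
      for xs :: "real list" by (induction xs) auto
    then show ?thesis unfolding n_def z_def p_def by (simp add: add.assoc)
  qed
  have z0: "\<forall>x\<in>set z. x = 0" unfolding z_def by simp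
  have srt: "sorted (sort n @ z @ sort p)"
  proof -
    have "sorted z" using z0 by (induction z) auto
    then show ?thesis unfolding sorted_append using z0 unfolding n_def p_def by force
  qed
  have eq: "sort xs = sort n @ z @ sort p" by (rule properties_for_sort[OF ms srt])
  have cz: "count (mset xs) 0 = length z" unfolding count_mset count_list_filter z_def ..
  have lxs: "length xs = length n + length z + length p" using arg_cong[OF ms, of size] by simp
  show ?thesis
  proof (cases "j < length n")
    case True
    then have "(sort xs)!j = (sort n)!j" unfolding eq by (simp add: nth_append)
    moreover have "(sort n)!j \<in> set n" using True by (metis length_sort nth_mem set_sort)
    ultimately have "(sort xs)!j < 0" unfolding n_def by auto
    then show ?thesis using True unfolding n_def by simp
  next
    case False
    show ?thesis
    proof (cases "j < length n + length z")
      case True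
      then have jz: "j - length n < length z" using False by simp
      then have "(sort xs)!j = z!(j - length n)" unfolding eq using False by (simp add: nth_append)
      moreover have "z!(j - length n) \<in> set z" using True False by simp
      ultimately have "(sort xs)!j = 0" using z0 by simp
      then show ?thesis using True False cz unfolding n_def by simp
    next
      case F2: False
      then have "\<not> j - length n < length z" using False by simp
      then have "(sort xs)!j = (sort p)!(j - length n - length z)" unfolding eq using False
        by (simp add: nth_append)
      moreover have "j - length n - length z < length p" using j lxs F2 by simp
      then have "(sort p)!(j - length n - length z) \<in> set p" by (metis length_sort nth_mem set_sort)
      ultimately have "(sort xs)!j > 0" unfolding p_def by auto
      then show ?thesis using F2 cz unfolding n_def by simp
    qed
  qed
qed

theorem lemma4p1:
  fixes N :: nat and f q w0 :: "nat \<Rightarrow> real" and A B :: "complex^2^2"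
    and i j :: nat and a :: real
  assumes "N \<ge> 2"
    and "\<forall>n\<in>{0..N}. f n \<noteq> 0"
    and "rank_AB_2 A B"
    and "self_adjoint_bc A B"
    and "i \<in> {1..N}"
    and "\<forall>m\<in>{1..N}. m \<noteq> i \<longrightarrow> w0 m > 0"
    and "a > 0"
    and "j < length (eig_list N f q (w0(i := a)) A B)"
    and "eig_list N f q (w0(i := a)) A B ! j = 0"
  shows "\<forall>b>a. j < length (eig_list N f q (w0(i := b)) A B)
                \<and> eig_list N f q (w0(i := b)) A B ! j = 0"
proof (intro allI impI)
  fix b assume ba: "b > a"
  interpret S: slp A B N f q
    by unfold_locales (use assms in auto)
  define wa where "wa = w0(i := a)"
  define wb where "wb = w0(i := b)"
  have pa: "\<forall>n\<in>{1..N}. wa n > 0" unfolding wa_def using assms(6,7) by auto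
  have pb: "\<forall>n\<in>{1..N}. wb n > 0" unfolding wb_def using assms(6,7) ba by auto
  have ha: "hpen S.X S.Hf (S.Gw wa) S.U1" by (rule S.hpen_w[OF pa])
  have hb: "hpen S.X S.Hf (S.Gw wb) S.U1" by (rule S.hpen_w[OF pb])
  obtain esa lama where sa: "orthG (S.Gw wa) esa" "set esa \<subseteq> S.X" "S.X \<subseteq> fv.span (set esa)"
      "\<forall>e\<in>set esa. eigHG S.Hf (S.Gw wa) S.X e (lama e)"
    using hpen.spectral[OF ha] by blast
  obtain esb lamb where sb: "orthG (S.Gw wb) esb" "set esb \<subseteq> S.X" "S.X \<subseteq> fv.span (set esb)"
      "\<forall>e\<in>set esb. eigHG S.Hf (S.Gw wb) S.X e (lamb e)"
    using hpen.spectral[OF hb] by blast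
  have La: "eig_list N f q wa A B = sort (map lama esa)" by (rule S.eig_list_eq[OF pa sa])
  have Lb: "eig_list N f q wb A B = sort (map lamb esb)" by (rule S.eig_list_eq[OF pb sb])
  have inr: "length esa = length esb \<and> length (filter (\<lambda>e. lama e < 0) esa) = length (filter (\<lambda>e. lamb e < 0) esb)"
    by (rule inertia[OF ha hb sa sb])
  have E0: "S.E wa 0 = S.E wb 0" unfolding S.sl_eq by simp
  have ca: "count (mset (map lama esa)) 0 = fv.dim (S.E wa 0)"
    unfolding S.spec_E(1)[OF pa sa] count_mset count_list_filter by (simp add: filter_map comp_def)
  have cb: "count (mset (map lamb esb)) 0 = fv.dim (S.E wb 0)"
    unfolding S.spec_E(1)[OF pb sb] count_mset count_list_filter by (simp add: filter_map comp_def)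
  have fa: "length (filter (\<lambda>x. x < 0) (map lama esa)) = length (filter (\<lambda>e. lama e < 0) esa)"
    by (simp add: filter_map comp_def)
  have fb: "length (filter (\<lambda>x. x < 0) (map lamb esb)) = length (filter (\<lambda>e. lamb e < 0) esb)"
    by (simp add: filter_map comp_def)
  have ja: "j < length (map lama esa)" using assms(8) unfolding wa_def[symmetric] La by simp
  have "(sort (map lama esa))!j = 0" using assms(9) unfolding wa_def[symmetric] La .
  then have cond: "length (filter (\<lambda>x. x < 0) (map lama esa)) \<le> j \<and>
      j < length (filter (\<lambda>x. x < 0) (map lama esa)) + count (mset (map lama esa)) 0"
    using sort_zero[OF ja] by simp
  have jb: "j < length (map lamb esb)" using ja inr by simp
  have "(sort (map lamb esb))!j = 0"
    using sort_zero[OF jb] cond fa fb ca cb E0 inr by simp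
  then show "j < length (eig_list N f q (w0(i := b)) A B) \<and> eig_list N f q (w0(i := b)) A B ! j = 0"
    using jb unfolding wb_def[symmetric] Lb by simp
qed


end
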